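(* Let $\alpha$ be a nonprincipal ultrafilter on $\mathbb{N}$ and let $(G_n, \mathcal{B}^{(n)}, \mu^{(n)}, \mathcal{B}_2^{(n)}, \mu_2^{(n)})_{n \in \mathbb{N}}$ be a sequence of probability groups. Let $G = \prod_{n \to \alpha} G_n$ be the ultraproduct group. Let $\mathcal{B}$ be the $\sigma$-algebra on $G$ generated by the internal sets $\prod_{n\to\alpha} A_n$ with $A_n \in \mathcal{B}^{(n)}$, and let $\mathcal{B}_2$ be the $\sigma$-algebra on $G^2$ generated by the internal sets $\prod_{n\to\alpha} C_n$ with $C_n \in \mathcal{B}_2^{(n)}$ (identifying $G^2$ with $\prod_{n\to\alpha} G_n^2$). Let $\mu$ and $\mu_2$ be the Loeb measures on $\mathcal{B}$ and $\mathcal{B}_2$ induced by the finitely additive set functions $\prod_{n\to\alpha} A_n \mapsto \lim_{n\to\alpha}\mu^{(n)}(A_n)$ and $\prod_{n\to\alpha} C_n \mapsto \lim_{n\to\alpha}\mu_2^{(n)}(C_n)$. Then $(G, \mathcal{B}, \mu, \mathcal{B}_2, \mu_2)$ is a probability group.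
   Context: A probability group is a tuple $(G, \mathcal{B}, \mu, \mathcal{B}_2, \mu_2)$ where $G$ is a group, $\mathcal{B}$ and $\mathcal{B}_2$ are $\sigma$-algebras on $G$ and $G^2$ respectively with $\mathcal{B}_2 \supseteq \mathcal{B}\times\mathcal{B}$ (the product $\sigma$-algebra), $\mu,\mu_2$ are probability measures on $\mathcal{B},\mathcal{B}_2$ with $\mu_2|_{\mathcal{B}\times\mathcal{B}} = \mu\times\mu$, such that: (i) multiplication $(G^2,\mathcal{B}_2)\to(G,\mathcal{B})$ is measurable; (ii) inversion $(G,\mathcal{B})\to(G,\mathcal{B})$ is measurable; (iii) $\mu$ is invariant under left translations, right translations and inversion; (iv) Fubini's theorem holds for every $\mathcal{B}_2$-measurable $f:G^2\to\mathbb{R}$, i.e. (a) for every $g\in G$ the functions $f(g,\cdot)$ and $f(\cdot,g)$ are $\mathcal{B}$-measurable, (b) the functions $g\mapsto\int_G f(g,h)\,d\mu(h)$ and $g\mapsto \int_G f(h,g)\,d\mu(h)$ are $\mathcal{B}$-measurable, and (c) $\int_G\int_G f(g,h)\,d\mu(g)\,d\mu(h) = \int_{G^2} f\,d\mu_2 = \int_G\int_G f(g,h)\,d\mu(h)\,d\mu(g)$. The Loeb measure is the Carathéodory extension of the indicated finitely additive set function on the algebra of internal sets to the generated $\sigma$-algebra.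
   Formalization: Clause (iv) of the probability-group definition, both for each $G_n$ and for the ultraproduct, covers only bounded $\mathcal{B}_2$-measurable $f:G^2\to\mathbb{R}$, and all the groups $G_n$ share one common underlying type of elements. Apart from conventions, each condition added here is assumed in the paper as well or is needed for the statement above to hold. *)

theory Defs
  imports "HOL-Probability.Probability" "HOL-Algebra.Group"
begin

definition meas_pres :: "'a measure \<Rightarrow> 'b measure \<Rightarrow> ('a \<Rightarrow> 'b) \<Rightarrow> bool" where
  "meas_pres M N f \<longleftrightarrow> f \<in> M \<rightarrow>\<^sub>M N \<and>
     (\<forall>A\<in>sets N. emeasure M (f -` A \<inter> space M) = emeasure N A)"

definition fubini_prop :: "'a measure \<Rightarrow> ('a \<times> 'a) measure \<Rightarrow> bool" where
  "fubini_prop M M2 \<longleftrightarrow>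
    (\<forall>f :: 'a \<times> 'a \<Rightarrow> real. f \<in> borel_measurable M2 \<and> (\<exists>B. \<forall>z\<in>space M2. \<bar>f z\<bar> \<le> B) \<longrightarrow>
       (\<forall>g\<in>space M. (\<lambda>h. f (g, h)) \<in> borel_measurable M \<and> (\<lambda>h. f (h, g)) \<in> borel_measurable M) \<and>
       (\<lambda>g. \<integral>h. f (g, h) \<partial>M) \<in> borel_measurable M \<and>
       (\<lambda>g. \<integral>h. f (h, g) \<partial>M) \<in> borel_measurable M \<and>
       (\<integral>h. (\<integral>g. f (g, h) \<partial>M) \<partial>M) = (\<integral>z. f z \<partial>M2) \<and>
       (\<integral>g. (\<integral>h. f (g, h) \<partial>M) \<partial>M) = (\<integral>z. f z \<partial>M2))"

definition prob_group :: "('g, 'b) monoid_scheme \<Rightarrow> 'g measure \<Rightarrow> ('g \<times> 'g) measure \<Rightarrow> bool" where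
  "prob_group G M M2 \<longleftrightarrow>
     group G \<and>
     space M = carrier G \<and> space M2 = carrier G \<times> carrier G \<and>
     prob_space M \<and> prob_space M2 \<and>
     sets (M \<Otimes>\<^sub>M M) \<subseteq> sets M2 \<and>
     (\<forall>A\<in>sets (M \<Otimes>\<^sub>M M). emeasure M2 A = emeasure (M \<Otimes>\<^sub>M M) A) \<and>
     (\<lambda>(x, y). x \<otimes>\<^bsub>G\<^esub> y) \<in> M2 \<rightarrow>\<^sub>M M \<and>
     (\<lambda>x. inv\<^bsub>G\<^esub> x) \<in> M \<rightarrow>\<^sub>M M \<and>
     (\<forall>g\<in>carrier G. meas_pres M M (\<lambda>x. g \<otimes>\<^bsub>G\<^esub> x) \<and> meas_pres M M (\<lambda>x. x \<otimes>\<^bsub>G\<^esub> g)) \<and>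
     meas_pres M M (\<lambda>x. inv\<^bsub>G\<^esub> x) \<and>
     fubini_prop M M2"

definition nonprincipal_ultrafilter :: "nat filter \<Rightarrow> bool" where
  "nonprincipal_ultrafilter \<alpha> \<longleftrightarrow>
     \<alpha> \<noteq> bot \<and>
     (\<forall>P. eventually P \<alpha> \<or> eventually (\<lambda>n. \<not> P n) \<alpha>) \<and>
     (\<forall>m. eventually (\<lambda>n. n \<noteq> m) \<alpha>)"

definition useqs :: "(nat \<Rightarrow> ('a, 'b) monoid_scheme) \<Rightarrow> (nat \<Rightarrow> 'a) set" where
  "useqs G = {x. \<forall>n. x n \<in> carrier (G n)}"

definition urel :: "nat filter \<Rightarrow> (nat \<Rightarrow> ('a, 'b) monoid_scheme) \<Rightarrow> ((nat \<Rightarrow> 'a) \<times> (nat \<Rightarrow> 'a)) set" where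
  "urel \<alpha> G = {(x, y). x \<in> useqs G \<and> y \<in> useqs G \<and> eventually (\<lambda>n. x n = y n) \<alpha>}"

definition uclass :: "nat filter \<Rightarrow> (nat \<Rightarrow> ('a, 'b) monoid_scheme) \<Rightarrow> (nat \<Rightarrow> 'a) \<Rightarrow> (nat \<Rightarrow> 'a) set" where
  "uclass \<alpha> G x = urel \<alpha> G `` {x}"

definition ultraprod_group :: "nat filter \<Rightarrow> (nat \<Rightarrow> ('a, 'b) monoid_scheme) \<Rightarrow> ((nat \<Rightarrow> 'a) set) monoid" where
  "ultraprod_group \<alpha> G =
     \<lparr> carrier = useqs G // urel \<alpha> G,
       mult = (\<lambda>X Y. uclass \<alpha> G (\<lambda>n. (SOME x. x \<in> X) n \<otimes>\<^bsub>G n\<^esub> (SOME y. y \<in> Y) n)),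
       one = uclass \<alpha> G (\<lambda>n. \<one>\<^bsub>G n\<^esub>) \<rparr>"

definition internal1 :: "nat filter \<Rightarrow> (nat \<Rightarrow> ('a, 'b) monoid_scheme) \<Rightarrow> (nat \<Rightarrow> 'a set) \<Rightarrow> (nat \<Rightarrow> 'a) set set" where
  "internal1 \<alpha> G A = {X \<in> useqs G // urel \<alpha> G. \<exists>x\<in>X. eventually (\<lambda>n. x n \<in> A n) \<alpha>}"

definition internal2 :: "nat filter \<Rightarrow> (nat \<Rightarrow> ('a, 'b) monoid_scheme) \<Rightarrow> (nat \<Rightarrow> ('a \<times> 'a) set)
     \<Rightarrow> ((nat \<Rightarrow> 'a) set \<times> (nat \<Rightarrow> 'a) set) set" where
  "internal2 \<alpha> G C = {(X, Y). X \<in> useqs G // urel \<alpha> G \<and> Y \<in> useqs G // urel \<alpha> G \<and>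
      (\<exists>x\<in>X. \<exists>y\<in>Y. eventually (\<lambda>n. (x n, y n) \<in> C n) \<alpha>)}"

text \<open>Caratheodory outer measure induced by the set function v on the internal sets I ` P
  (internal sets are indexed by their defining sequences, P is the admissible index set).\<close>
definition loeb_outer :: "'c set \<Rightarrow> ('i \<Rightarrow> 'c set) \<Rightarrow> ('i \<Rightarrow> ennreal) \<Rightarrow> 'i set \<Rightarrow> 'c set \<Rightarrow> ennreal" where
  "loeb_outer \<Omega> I v P X =
     (INF A \<in> {A :: nat \<Rightarrow> 'i. range A \<subseteq> P \<and> X \<subseteq> (\<Union>i. I (A i))}. \<Sum>i. v (A i))"

definition loeb_measure :: "'c set \<Rightarrow> ('i \<Rightarrow> 'c set) \<Rightarrow> ('i \<Rightarrow> ennreal) \<Rightarrow> 'i set \<Rightarrow> 'c measure" where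
  "loeb_measure \<Omega> I v P = measure_of \<Omega> (I ` P) (loeb_outer \<Omega> I v P)"

definition ultra_measure :: "nat filter \<Rightarrow> (nat \<Rightarrow> ('a, 'b) monoid_scheme) \<Rightarrow> (nat \<Rightarrow> 'a measure)
     \<Rightarrow> (nat \<Rightarrow> 'a) set measure" where
  "ultra_measure \<alpha> G M =
     loeb_measure (useqs G // urel \<alpha> G) (internal1 \<alpha> G)
       (\<lambda>A. ennreal (Lim \<alpha> (\<lambda>n. measure (M n) (A n))))
       {A. \<forall>n. A n \<in> sets (M n)}"

definition ultra_measure2 :: "nat filter \<Rightarrow> (nat \<Rightarrow> ('a, 'b) monoid_scheme) \<Rightarrow> (nat \<Rightarrow> ('a \<times> 'a) measure)
     \<Rightarrow> ((nat \<Rightarrow> 'a) set \<times> (nat \<Rightarrow> 'a) set) measure" where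
  "ultra_measure2 \<alpha> G M2 =
     loeb_measure ((useqs G // urel \<alpha> G) \<times> (useqs G // urel \<alpha> G)) (internal2 \<alpha> G)
       (\<lambda>C. ennreal (Lim \<alpha> (\<lambda>n. measure (M2 n) (C n))))
       {C. \<forall>n. C n \<in> sets (M2 n)}"

end

theory Submission
  imports Defs
begin


definition ubdd :: "(nat \<Rightarrow> real) \<Rightarrow> bool" where
  "ubdd f \<longleftrightarrow> (\<exists>B. \<forall>n. \<bar>f n\<bar> \<le> B)"

lemma ubddI: "(\<And>n. \<bar>f n\<bar> \<le> B) \<Longrightarrow> ubdd f"
  unfolding ubdd_def by blast

lemma ubdd_01: "(\<And>n. 0 \<le> f n) \<Longrightarrow> (\<And>n. f n \<le> 1) \<Longrightarrow> ubdd f"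
  by (rule ubddI[of _ 1]) (smt (verit))

lemma ubdd_add: "ubdd f \<Longrightarrow> ubdd g \<Longrightarrow> ubdd (\<lambda>n. f n + g n)"
  unfolding ubdd_def by (metis abs_triangle_ineq add_mono order_trans)

lemma ubdd_mult: "ubdd f \<Longrightarrow> ubdd g \<Longrightarrow> ubdd (\<lambda>n. f n * g n)"
  unfolding ubdd_def
proof (elim exE)
  fix A B assume a: "\<forall>n. \<bar>f n\<bar> \<le> A" and b: "\<forall>n. \<bar>g n\<bar> \<le> B"
  show "\<exists>C. \<forall>n. \<bar>f n * g n\<bar> \<le> C"
  proof (intro exI allI)
    fix n
    have "0 \<le> A" using a abs_ge_zero order_trans by blast
    have "\<bar>f n\<bar> * \<bar>g n\<bar> \<le> A * B"
      by (rule mult_mono) (use a b \<open>0 \<le> A\<close> in auto)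
    then show "\<bar>f n * g n\<bar> \<le> A * B" by (simp add: abs_mult)
  qed
qed

lemma ubdd_const: "ubdd (\<lambda>n. c)"
  by (rule ubddI[of _ "\<bar>c\<bar>"]) simp

lemma ubdd_sum: "(\<And>j. j \<in> S \<Longrightarrow> ubdd (f j)) \<Longrightarrow> ubdd (\<lambda>n. \<Sum>j\<in>S. f j n)"
proof (induction S rule: infinite_finite_induct)
  case (infinite A) then show ?case by (simp add: ubdd_const)
next
  case empty then show ?case by (simp add: ubdd_const)
next
  case (insert x F) then show ?case by (simp add: ubdd_add)
qed

locale ultra =
  fixes \<alpha> :: "nat filter"
  assumes nu: "nonprincipal_ultrafilter \<alpha>"
begin

lemma nbot: "\<alpha> \<noteq> bot" using nu unfolding nonprincipal_ultrafilter_def by auto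

lemma ev_or: "eventually P \<alpha> \<or> eventually (\<lambda>n. \<not> P n) \<alpha>"
  using nu unfolding nonprincipal_ultrafilter_def by auto

lemma ev_not_iff: "eventually (\<lambda>n. \<not> P n) \<alpha> \<longleftrightarrow> \<not> eventually P \<alpha>"
proof
  assume a: "eventually (\<lambda>n. \<not> P n) \<alpha>" show "\<not> eventually P \<alpha>"
  proof
    assume "eventually P \<alpha>"
    with a have "eventually (\<lambda>n. False) \<alpha>" by (auto elim: eventually_elim2)
    with nbot show False by (simp add: eventually_False)
  qed
next
  assume "\<not> eventually P \<alpha>" then show "eventually (\<lambda>n. \<not> P n) \<alpha>" using ev_or by auto
qed

lemma ev_False: "\<not> eventually (\<lambda>n. False) \<alpha>"
  using nbot by (simp add: eventually_False)

lemma ev_disj: "eventually (\<lambda>n. P n \<or> Q n) \<alpha> \<longleftrightarrow> eventually P \<alpha> \<or> eventually Q \<alpha>"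
proof
  assume a: "eventually (\<lambda>n. P n \<or> Q n) \<alpha>"
  show "eventually P \<alpha> \<or> eventually Q \<alpha>"
  proof (rule ccontr)
    assume "\<not> (eventually P \<alpha> \<or> eventually Q \<alpha>)"
    then have "eventually (\<lambda>n. \<not> P n) \<alpha>" "eventually (\<lambda>n. \<not> Q n) \<alpha>"
      using ev_not_iff by auto
    with a have "eventually (\<lambda>n. (P n \<or> Q n) \<and> \<not> P n \<and> \<not> Q n) \<alpha>" by (simp add: eventually_conj)
    then have "eventually (\<lambda>n. False) \<alpha>" by (rule eventually_mono) auto
    with ev_False show False by simp
  qed
qed (auto elim: eventually_mono)

lemma ev_ex_less: "eventually (\<lambda>n. \<exists>j<(k::nat). P j n) \<alpha> \<Longrightarrow> \<exists>j<k. eventually (P j) \<alpha>"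
proof (induction k)
  case 0 then show ?case using ev_False by simp
next
  case (Suc k)
  have "eventually (\<lambda>n. (\<exists>j<k. P j n) \<or> P k n) \<alpha>"
    using Suc.prems by (rule eventually_mono) (auto simp: less_Suc_eq)
  then have "eventually (\<lambda>n. \<exists>j<k. P j n) \<alpha> \<or> eventually (P k) \<alpha>" using ev_disj by simp
  then show ?case using Suc.IH by (meson less_SucI lessI)
qed

lemma ev_ge: "eventually (\<lambda>n. (k::nat) \<le> n) \<alpha>"
proof (induction k)
  case 0 then show ?case by simp
next
  case (Suc k)
  have "eventually (\<lambda>n. n \<noteq> k) \<alpha>" using nu unfolding nonprincipal_ultrafilter_def by auto
  with Suc show ?case by (auto elim: eventually_elim2)
qed

lemma lim_ex:
  assumes "ubdd f" shows "\<exists>L. (f \<longlongrightarrow> L) \<alpha>"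
proof -
  obtain B where B: "\<And>n. \<bar>f n\<bar> \<le> B" using assms unfolding ubdd_def by auto
  define S where "S = {t. eventually (\<lambda>n. t \<le> f n) \<alpha>}"
  have "\<forall>n. -B \<le> f n" using B by (metis abs_le_iff minus_le_iff)
  then have mS: "-B \<in> S" unfolding S_def by (auto intro!: always_eventually)
  have bS: "t \<le> B" if "t \<in> S" for t
  proof (rule ccontr)
    assume "\<not> t \<le> B"
    have "\<And>n. t \<le> f n \<Longrightarrow> False" using B \<open>\<not> t \<le> B\<close> by (metis abs_ge_self order_trans)
    with that have "eventually (\<lambda>n. False) \<alpha>" unfolding S_def
      by (auto elim!: eventually_mono)
    with ev_False show False by simp
  qed
  have ne: "S \<noteq> {}" using mS by auto
  have bdd: "bdd_above S" using bS by (meson bdd_aboveI)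
  define L where "L = Sup S"
  have "(f \<longlongrightarrow> L) \<alpha>"
  proof (rule order_tendstoI)
    fix y assume "y < L"
    then obtain t where "t \<in> S" "y < t" using less_cSup_iff[OF ne bdd] unfolding L_def by auto
    then show "eventually (\<lambda>n. y < f n) \<alpha>" unfolding S_def by (auto elim: eventually_mono)
  next
    fix y assume "L < y"
    show "eventually (\<lambda>n. f n < y) \<alpha>"
    proof (rule ccontr)
      assume "\<not> eventually (\<lambda>n. f n < y) \<alpha>"
      then have "eventually (\<lambda>n. \<not> f n < y) \<alpha>" using ev_not_iff by blast
      then have "y \<in> S" unfolding S_def by (auto elim: eventually_mono)
      then have "y \<le> L" unfolding L_def using bdd by (rule cSup_upper)
      with \<open>L < y\<close> show False by simp
    qed
  qed
  then show ?thesis by blast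
qed

lemma tendsto_ulim: "ubdd f \<Longrightarrow> (f \<longlongrightarrow> Lim \<alpha> f) \<alpha>"
proof -
  assume "ubdd f"
  then obtain L where L: "(f \<longlongrightarrow> L) \<alpha>" using lim_ex by blast
  then have "Lim \<alpha> f = L" using tendsto_Lim nbot by blast
  with L show ?thesis by simp
qed

lemma Lim_eqI: "(f \<longlongrightarrow> L) \<alpha> \<Longrightarrow> Lim \<alpha> f = L"
  using tendsto_Lim nbot by blast

lemma Lim_add: "ubdd f \<Longrightarrow> ubdd g \<Longrightarrow> Lim \<alpha> (\<lambda>n. f n + g n) = Lim \<alpha> f + Lim \<alpha> g"
  by (intro Lim_eqI tendsto_add tendsto_ulim)

lemma Lim_diff: "ubdd f \<Longrightarrow> ubdd g \<Longrightarrow> Lim \<alpha> (\<lambda>n. f n - g n) = Lim \<alpha> f - Lim \<alpha> g"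
  by (intro Lim_eqI tendsto_diff tendsto_ulim)

lemma Lim_mult: "ubdd f \<Longrightarrow> ubdd g \<Longrightarrow> Lim \<alpha> (\<lambda>n. f n * g n) = Lim \<alpha> f * Lim \<alpha> g"
  by (intro Lim_eqI tendsto_mult tendsto_ulim)

lemma Lim_cmult: "ubdd f \<Longrightarrow> Lim \<alpha> (\<lambda>n. c * f n) = c * Lim \<alpha> f"
  by (intro Lim_eqI tendsto_mult tendsto_ulim tendsto_const)

lemma Lim_const: "Lim \<alpha> (\<lambda>n. c) = c"
  by (intro Lim_eqI tendsto_const)

lemma Lim_sum: "(\<And>j. j \<in> S \<Longrightarrow> ubdd (f j)) \<Longrightarrow> Lim \<alpha> (\<lambda>n. \<Sum>j\<in>S. f j n) = (\<Sum>j\<in>S. Lim \<alpha> (f j))"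
  by (intro Lim_eqI tendsto_sum tendsto_ulim) auto

lemma Lim_cong: "ubdd f \<Longrightarrow> eventually (\<lambda>n. f n = g n) \<alpha> \<Longrightarrow> Lim \<alpha> f = Lim \<alpha> g"
proof -
  assume b: "ubdd f" and e: "eventually (\<lambda>n. f n = g n) \<alpha>"
  have "(g \<longlongrightarrow> Lim \<alpha> f) \<alpha>" using tendsto_cong[OF e] tendsto_ulim[OF b] by simp
  then show ?thesis by (rule Lim_eqI[symmetric])
qed

lemma Lim_mono: "ubdd f \<Longrightarrow> ubdd g \<Longrightarrow> eventually (\<lambda>n. f n \<le> g n) \<alpha> \<Longrightarrow> Lim \<alpha> f \<le> Lim \<alpha> g"
  by (rule tendsto_le[OF nbot tendsto_ulim tendsto_ulim])

lemma Lim_ge: "ubdd f \<Longrightarrow> eventually (\<lambda>n. c \<le> f n) \<alpha> \<Longrightarrow> c \<le> Lim \<alpha> f"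
  using Lim_mono[of "\<lambda>n. c" f] by (simp add: ubdd_const Lim_const)

lemma Lim_le: "ubdd f \<Longrightarrow> eventually (\<lambda>n. f n \<le> c) \<alpha> \<Longrightarrow> Lim \<alpha> f \<le> c"
  using Lim_mono[of f "\<lambda>n. c"] by (simp add: ubdd_const Lim_const)

lemma Lim_gt_ev: "ubdd f \<Longrightarrow> c < Lim \<alpha> f \<Longrightarrow> eventually (\<lambda>n. c < f n) \<alpha>"
  using order_tendstoD(1)[OF tendsto_ulim] by blast

end



locale loeb = ultra +
  fixes \<Omega> :: "'c set" and r :: "'c \<Rightarrow> nat \<Rightarrow> 'x" and N :: "nat \<Rightarrow> 'x measure"
    and I :: "(nat \<Rightarrow> 'x set) \<Rightarrow> 'c set"
  assumes I_eq: "\<And>A. I A = {\<omega>\<in>\<Omega>. eventually (\<lambda>n. r \<omega> n \<in> A n) \<alpha>}"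
  and r_space: "\<And>\<omega> n. \<omega> \<in> \<Omega> \<Longrightarrow> r \<omega> n \<in> space (N n)"
  and r_surj: "\<And>x. (\<And>n. x n \<in> space (N n)) \<Longrightarrow> \<exists>\<omega>\<in>\<Omega>. eventually (\<lambda>n. r \<omega> n = x n) \<alpha>"
  and probN: "\<And>n. prob_space (N n)"
begin

definition "P = {A. \<forall>n. A n \<in> sets (N n)}"
definition "v A = ennreal (Lim \<alpha> (\<lambda>n. measure (N n) (A n)))"
definition "R = I ` P"
definition "L = loeb_measure \<Omega> I v P"

lemma space_ne: "space (N n) \<noteq> {}"
  using prob_space.not_empty[OF probN] by blast

lemma meas_le1: "measure (N n) A \<le> 1"
  using prob_space.prob_le_1[OF probN] by blast

lemma ubdd_meas: "ubdd (\<lambda>n. measure (N n) (A n))"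
  by (rule ubdd_01) (simp_all add: meas_le1)

lemma Lim_meas_nonneg: "0 \<le> Lim \<alpha> (\<lambda>n. measure (N n) (A n))"
  by (rule Lim_ge[OF ubdd_meas]) simp

lemma Lim_meas_le1: "Lim \<alpha> (\<lambda>n. measure (N n) (A n)) \<le> 1"
  by (rule Lim_le[OF ubdd_meas]) (simp add: meas_le1)

lemma PD: "A \<in> P \<Longrightarrow> A n \<in> sets (N n)" unfolding P_def by auto
lemma P_space: "A \<in> P \<Longrightarrow> A n \<subseteq> space (N n)" using PD sets.sets_into_space by blast

lemma I_sub: "I A \<subseteq> \<Omega>" unfolding I_eq by auto

lemma I_mem: "\<omega> \<in> I A \<longleftrightarrow> \<omega> \<in> \<Omega> \<and> eventually (\<lambda>n. r \<omega> n \<in> A n) \<alpha>"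
  unfolding I_eq by auto

lemma I_Int: "I (\<lambda>n. A n \<inter> B n) = I A \<inter> I B"
  unfolding I_eq by (auto simp: eventually_conj_iff)

lemma I_Un: "I (\<lambda>n. A n \<union> B n) = I A \<union> I B"
  unfolding I_eq using ev_disj by auto

lemma I_compl: "I (\<lambda>n. space (N n) - A n) = \<Omega> - I A"
proof -
  have "eventually (\<lambda>n. r \<omega> n \<in> space (N n) - A n) \<alpha> \<longleftrightarrow> \<not> eventually (\<lambda>n. r \<omega> n \<in> A n) \<alpha>"
    if "\<omega> \<in> \<Omega>" for \<omega>
    using r_space[OF that] ev_not_iff[of "\<lambda>n. r \<omega> n \<in> A n"] by simp
  then show ?thesis unfolding I_eq by auto
qed

lemma I_diff: "I (\<lambda>n. A n - B n) = I A - I B"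
proof -
  have "eventually (\<lambda>n. r \<omega> n \<in> A n - B n) \<alpha> \<longleftrightarrow> eventually (\<lambda>n. r \<omega> n \<in> A n) \<alpha> \<and> \<not> eventually (\<lambda>n. r \<omega> n \<in> B n) \<alpha>"
    for \<omega>
    using ev_not_iff[of "\<lambda>n. r \<omega> n \<in> B n"]
      eventually_conj_iff[of "\<lambda>n. r \<omega> n \<in> A n" "\<lambda>n. r \<omega> n \<notin> B n" \<alpha>] by simp
  then show ?thesis unfolding I_eq by auto
qed

lemma I_empty: "I (\<lambda>n. {}) = {}"
  unfolding I_eq using ev_False by simp

lemma I_space: "I (\<lambda>n. space (N n)) = \<Omega>"
  unfolding I_eq using r_space by auto

lemma I_UN_less: "I (\<lambda>n. \<Union>i<k. B i n) = (\<Union>i<(k::nat). I (B i))"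
proof -
  have "eventually (\<lambda>n. r \<omega> n \<in> (\<Union>i<k. B i n)) \<alpha> \<longleftrightarrow> (\<exists>i<k. eventually (\<lambda>n. r \<omega> n \<in> B i n) \<alpha>)" for \<omega>
  proof
    assume "eventually (\<lambda>n. r \<omega> n \<in> (\<Union>i<k. B i n)) \<alpha>"
    then have "eventually (\<lambda>n. \<exists>i<k. r \<omega> n \<in> B i n) \<alpha>" by (rule eventually_mono) auto
    then show "\<exists>i<k. eventually (\<lambda>n. r \<omega> n \<in> B i n) \<alpha>" by (rule ev_ex_less)
  next
    assume "\<exists>i<k. eventually (\<lambda>n. r \<omega> n \<in> B i n) \<alpha>"
    then show "eventually (\<lambda>n. r \<omega> n \<in> (\<Union>i<k. B i n)) \<alpha>" by (auto elim: eventually_mono)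
  qed
  then show ?thesis unfolding I_eq by auto
qed

lemma some_in: "S \<noteq> {} \<Longrightarrow> (SOME y. y \<in> S) \<in> S"
  by (simp add: some_in_eq)

lemma I_ne:
  assumes "eventually (\<lambda>n. A n \<inter> space (N n) \<noteq> {}) \<alpha>"
  shows "I A \<noteq> {}"
proof -
  define x where "x n = (if A n \<inter> space (N n) \<noteq> {} then SOME y. y \<in> A n \<inter> space (N n)
     else SOME y. y \<in> space (N n))" for n
  have x: "x n \<in> space (N n)" for n
    using some_in[OF space_ne[of n]] some_in[of "A n \<inter> space (N n)"] unfolding x_def by auto
  obtain \<omega> where \<omega>: "\<omega> \<in> \<Omega>" "eventually (\<lambda>n. r \<omega> n = x n) \<alpha>" using r_surj[OF x] by blast
  have "eventually (\<lambda>n. r \<omega> n \<in> A n) \<alpha>"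
    using \<omega>(2) assms
  proof (eventually_elim)
    case (elim n)
    then have "x n \<in> A n \<inter> space (N n)" using some_in[of "A n \<inter> space (N n)"] unfolding x_def by auto
    with elim show ?case by simp
  qed
  with \<omega> show ?thesis unfolding I_eq by auto
qed

lemma I_ne_rev:
  assumes "I A \<noteq> {}" shows "eventually (\<lambda>n. A n \<inter> space (N n) \<noteq> {}) \<alpha>"
proof -
  obtain \<omega> where "\<omega> \<in> I A" using assms by auto
  then have "\<omega> \<in> \<Omega>" "eventually (\<lambda>n. r \<omega> n \<in> A n) \<alpha>" unfolding I_eq by auto
  then show ?thesis by (auto elim!: eventually_mono simp: r_space)
qed

lemma I_empty_ev:
  assumes "I A = {}" shows "eventually (\<lambda>n. A n \<inter> space (N n) = {}) \<alpha>"
proof (rule ccontr)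
  assume "\<not> eventually (\<lambda>n. A n \<inter> space (N n) = {}) \<alpha>"
  then have "eventually (\<lambda>n. A n \<inter> space (N n) \<noteq> {}) \<alpha>"
    using ev_not_iff[of "\<lambda>n. A n \<inter> space (N n) = {}"] by simp
  from I_ne[OF this] assms show False by simp
qed

lemma I_subset_ev:
  assumes "A \<in> P" "I A \<subseteq> I B" shows "eventually (\<lambda>n. A n \<subseteq> B n) \<alpha>"
proof -
  have "I (\<lambda>n. A n - B n) = {}" using assms(2) I_diff by auto
  from I_empty_ev[OF this] show ?thesis
    by (rule eventually_mono) (use P_space[OF assms(1)] in auto)
qed

lemma I_eq_ev:
  assumes "A \<in> P" "B \<in> P" "I A = I B" shows "eventually (\<lambda>n. A n = B n) \<alpha>"
proof -
  have "eventually (\<lambda>n. A n \<subseteq> B n) \<alpha>" "eventually (\<lambda>n. B n \<subseteq> A n) \<alpha>"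
    using I_subset_ev[OF assms(1), of B] I_subset_ev[OF assms(2), of A] assms(3) by auto
  then show ?thesis by eventually_elim auto
qed

lemma saturation:
  assumes cov: "I A \<subseteq> (\<Union>i::nat. I (B i))"
  shows "\<exists>k. I A \<subseteq> (\<Union>i<k. I (B i))"
proof (rule ccontr)
  assume H: "\<not> (\<exists>k. I A \<subseteq> (\<Union>i<k. I (B i)))"
  define E where "E k n \<longleftrightarrow> k \<le> n \<and> (A n - (\<Union>i<k. B i n)) \<inter> space (N n) \<noteq> {}" for k n
  have evE: "eventually (E k) \<alpha>" for k
  proof -
    have ne: "I (\<lambda>n. A n - (\<Union>i<k. B i n)) \<noteq> {}"
      using H by (auto simp: I_diff I_UN_less)
    have "eventually (\<lambda>n. k \<le> n \<and> (A n - (\<Union>i<k. B i n)) \<inter> space (N n) \<noteq> {}) \<alpha>"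
      using eventually_conj[OF ev_ge[of k] I_ne_rev[OF ne]] .
    then show ?thesis unfolding E_def by simp
  qed
  define km where "km n = (GREATEST k. E k n)" for n
  have kmE: "E (km n) n" if "E k n" for k n
    unfolding km_def by (rule GreatestI_nat[of "\<lambda>k. E k n" k, OF that]) (auto simp: E_def)
  have km_ge: "k \<le> km n" if "E k n" for k n
    unfolding km_def by (rule Greatest_le_nat[of "\<lambda>k. E k n" k, OF that]) (auto simp: E_def)
  define x where "x n = (if E 0 n then SOME y. y \<in> (A n - (\<Union>i<km n. B i n)) \<inter> space (N n)
     else SOME y. y \<in> space (N n))" for n
  have x_in: "x n \<in> (A n - (\<Union>i<km n. B i n)) \<inter> space (N n)" if "E 0 n" for n
  proof -
    have "E (km n) n" using kmE[OF that] .
    then have "(A n - (\<Union>i<km n. B i n)) \<inter> space (N n) \<noteq> {}" unfolding E_def by simp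
    from some_in[OF this] show ?thesis unfolding x_def using that by simp
  qed
  have x: "x n \<in> space (N n)" for n
    using x_in[of n] some_in[OF space_ne[of n]] unfolding x_def by auto
  obtain \<omega> where \<omega>: "\<omega> \<in> \<Omega>" "eventually (\<lambda>n. r \<omega> n = x n) \<alpha>" using r_surj[OF x] by blast
  have "eventually (\<lambda>n. r \<omega> n \<in> A n) \<alpha>"
    using \<omega>(2) evE[of 0] by eventually_elim (use x_in in auto)
  then have "\<omega> \<in> I A" using \<omega>(1) unfolding I_eq by auto
  then obtain i where "\<omega> \<in> I (B i)" using cov by auto
  then have "eventually (\<lambda>n. r \<omega> n \<in> B i n) \<alpha>" unfolding I_eq by auto
  then have "eventually (\<lambda>n. False) \<alpha>"
    using \<omega>(2) evE[of "Suc i"]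
  proof eventually_elim
    case (elim n)
    have "E 0 n" using elim(3) unfolding E_def by auto
    have "Suc i \<le> km n" using km_ge[OF elim(3)] .
    then show ?case using x_in[OF \<open>E 0 n\<close>] elim(1,2) by auto
  qed
  with ev_False show False by simp
qed

lemma P_Int: "A \<in> P \<Longrightarrow> B \<in> P \<Longrightarrow> (\<lambda>n. A n \<inter> B n) \<in> P" unfolding P_def by auto
lemma P_Un: "A \<in> P \<Longrightarrow> B \<in> P \<Longrightarrow> (\<lambda>n. A n \<union> B n) \<in> P" unfolding P_def by auto
lemma P_diff: "A \<in> P \<Longrightarrow> B \<in> P \<Longrightarrow> (\<lambda>n. A n - B n) \<in> P" unfolding P_def by auto
lemma P_compl: "A \<in> P \<Longrightarrow> (\<lambda>n. space (N n) - A n) \<in> P" unfolding P_def by auto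
lemma P_empty: "(\<lambda>n. {}) \<in> P" unfolding P_def by auto
lemma P_space': "(\<lambda>n. space (N n)) \<in> P" unfolding P_def by auto

lemma v_wd: "A \<in> P \<Longrightarrow> B \<in> P \<Longrightarrow> I A = I B \<Longrightarrow> v A = v B"
proof -
  assume a: "A \<in> P" "B \<in> P" "I A = I B"
  have "eventually (\<lambda>n. measure (N n) (A n) = measure (N n) (B n)) \<alpha>"
    using I_eq_ev[OF a] by (rule eventually_mono) simp
  then show ?thesis unfolding v_def using Lim_cong[OF ubdd_meas] by simp
qed

definition "fR S = v (SOME A. A \<in> P \<and> I A = S)"

lemma fR_I: "A \<in> P \<Longrightarrow> fR (I A) = v A"
  unfolding fR_def by (rule someI2[of _ A]) (auto intro: v_wd)

lemma R_Pow: "R \<subseteq> Pow \<Omega>" unfolding R_def using I_sub by auto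

lemma R_alg: "algebra \<Omega> R"
  unfolding algebra_iff_Un
proof (intro conjI ballI)
  show "R \<subseteq> Pow \<Omega>" by (rule R_Pow)
  show "{} \<in> R" unfolding R_def by (rule image_eqI[of _ I "\<lambda>n. {}", OF I_empty[symmetric] P_empty])
next
  fix a assume "a \<in> R"
  then obtain A where "A \<in> P" "a = I A" unfolding R_def by auto
  then show "\<Omega> - a \<in> R" unfolding R_def by (intro image_eqI[of _ I "\<lambda>n. space (N n) - A n", OF _ P_compl[OF \<open>A \<in> P\<close>]]) (simp add: I_compl)
next
  fix a b assume "a \<in> R" "b \<in> R"
  then obtain A B where "A \<in> P" "a = I A" "B \<in> P" "b = I B" unfolding R_def by auto
  then show "a \<union> b \<in> R" unfolding R_def by (intro image_eqI[of _ I "\<lambda>n. A n \<union> B n", OF _ P_Un[OF \<open>A \<in> P\<close> \<open>B \<in> P\<close>]]) (simp add: I_Un)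
qed

lemma R_ring: "ring_of_sets \<Omega> R"
  using R_alg unfolding algebra_def by auto

lemma R_Int_stable: "Int_stable R"
  unfolding Int_stable_def
proof (intro ballI)
  fix a b assume "a \<in> R" "b \<in> R"
  then obtain A B where "A \<in> P" "a = I A" "B \<in> P" "b = I B" unfolding R_def by auto
  then show "a \<inter> b \<in> R" unfolding R_def by (intro image_eqI[of _ I "\<lambda>n. A n \<inter> B n", OF _ P_Int[OF \<open>A \<in> P\<close> \<open>B \<in> P\<close>]]) (simp add: I_Int)
qed

lemma R_top: "\<Omega> \<in> R" unfolding R_def by (rule image_eqI[of _ I "\<lambda>n. space (N n)", OF I_space[symmetric] P_space'])

lemma fR_pos: "positive R fR"
proof -
  have "fR {} = v (\<lambda>n. {})" using fR_I[OF P_empty] I_empty by simp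
  then have "fR {} = 0" unfolding v_def by (simp add: Lim_const)
  then show ?thesis unfolding positive_def by simp
qed

lemma fR_add: "additive R fR"
  unfolding additive_def
proof (intro ballI impI)
  fix a b assume "a \<in> R" "b \<in> R" and d: "a \<inter> b = {}"
  then obtain A B where AB: "A \<in> P" "a = I A" "B \<in> P" "b = I B" unfolding R_def by auto
  have "I (\<lambda>n. A n \<inter> B n) = {}" using d AB I_Int by auto
  from I_empty_ev[OF this] have ev: "eventually (\<lambda>n. A n \<inter> B n = {}) \<alpha>"
    by (rule eventually_mono) (use P_space[OF AB(1)] in auto)
  have "fR (a \<union> b) = v (\<lambda>n. A n \<union> B n)" using AB fR_I[OF P_Un[OF AB(1,3)]] I_Un by simp
  also have "\<dots> = ennreal (Lim \<alpha> (\<lambda>n. measure (N n) (A n) + measure (N n) (B n)))"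
    unfolding v_def
  proof (intro arg_cong[where f=ennreal] Lim_cong[OF ubdd_meas])
    show "eventually (\<lambda>n. measure (N n) (A n \<union> B n) = measure (N n) (A n) + measure (N n) (B n)) \<alpha>"
      using ev by (rule eventually_mono)
        (use finite_measure.finite_measure_Union[OF prob_space.axioms(1)[OF probN]] PD[OF AB(1)] PD[OF AB(3)] in auto)
  qed
  also have "\<dots> = v A + v B" unfolding v_def
    by (simp add: Lim_add ubdd_meas ennreal_plus[symmetric] Lim_meas_nonneg del: ennreal_plus)
  finally show "fR (a \<union> b) = fR a + fR b" using AB fR_I by simp
qed

lemma fR_fin: "\<forall>a\<in>R. fR a \<noteq> \<infinity>"
  unfolding R_def using fR_I by (auto simp: v_def)

lemma fR_cont:
  assumes S: "range S \<subseteq> R" "decseq S" "(\<Inter>i. S i) = {}"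
  shows "(\<lambda>i. fR (S i)) \<longlonglongrightarrow> 0"
proof -
  have "\<forall>i. \<exists>A. A \<in> P \<and> S i = I A" using S(1) unfolding R_def by auto
  then obtain A where A: "\<And>i. A i \<in> P" "\<And>i. S i = I (A i)" by metis
  define C where "C i n = space (N n) - A i n" for i n
  have IC: "I (C i) = \<Omega> - S i" for i unfolding C_def using I_compl A by simp
  have "I (A 0) \<subseteq> (\<Union>i. I (C i))"
    using S(3) I_sub[of "A 0"] A(2)[of 0] IC by auto
  from saturation[OF this] obtain k where k: "I (A 0) \<subseteq> (\<Union>i<k. I (C i))" by blast
  have Sk: "S k = {}"
  proof (rule ccontr)
    assume "S k \<noteq> {}"
    then obtain \<omega> where w: "\<omega> \<in> S k" by auto
    have "S k \<subseteq> S 0" using S(2) by (simp add: decseq_def)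
    with w k A(2) obtain i where "i < k" "\<omega> \<in> I (C i)" by auto
    then have "\<omega> \<notin> S i" using IC by auto
    moreover have "S k \<subseteq> S i" using S(2) \<open>i < k\<close> by (simp add: decseq_def)
    ultimately show False using w by auto
  qed
  have "eventually (\<lambda>i. fR (S i) = 0) sequentially"
  proof (rule eventually_sequentiallyI[of k])
    fix m assume "k \<le> m"
    then have "S m = {}" using Sk S(2) by (auto simp: decseq_def)
    then show "fR (S m) = 0" using fR_pos by (simp add: positive_def)
  qed
  then show ?thesis by (rule tendsto_eventually)
qed

lemma fR_ca: "countably_additive R fR"
  by (rule ring_of_sets.empty_continuous_imp_countably_additive[OF R_ring fR_pos fR_add fR_fin fR_cont])

abbreviation "OM \<equiv> outer_measure R fR"

lemma fR_inc: "increasing R fR"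
  by (rule ring_of_sets.additive_increasing[OF R_ring fR_pos fR_add])

lemma O_ms: "measure_space \<Omega> (sigma_sets \<Omega> R) OM"
proof -
  let ?ls = "lambda_system \<Omega> (Pow \<Omega>) OM"
  have mls: "measure_space \<Omega> ?ls OM"
    using sigma_algebra.caratheodory_lemma
            [OF sigma_algebra_Pow ring_of_sets.outer_measure_space_outer_measure [OF R_ring fR_pos fR_inc]]
    by simp
  hence sls: "sigma_algebra \<Omega> ?ls"
    by (simp add: measure_space_def)
  have "R \<subseteq> ?ls"
    by (rule ring_of_sets.algebra_subset_lambda_system[OF R_ring fR_pos fR_inc fR_add])
  hence sgs_sb: "sigma_sets \<Omega> R \<subseteq> ?ls"
    using sigma_algebra.sigma_sets_subset [OF sls, of "R"]
    by simp
  show ?thesis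
    by (rule measure_down [OF mls], rule sigma_algebra_sigma_sets)
       (simp_all add: sgs_sb R_Pow)
qed

lemma loeb_outer_eq: "loeb_outer \<Omega> I v P X = OM X"
proof (rule antisym)
  show "loeb_outer \<Omega> I v P X \<le> OM X"
    unfolding outer_measure_def
  proof (rule INF_greatest)
    fix S :: "nat \<Rightarrow> 'c set" assume "S \<in> {A. range A \<subseteq> R \<and> disjoint_family A \<and> X \<subseteq> (\<Union>i. A i)}"
    then have S: "range S \<subseteq> R" "X \<subseteq> (\<Union>i. S i)" by auto
    have "\<forall>i. \<exists>A. A \<in> P \<and> S i = I A" using S(1) unfolding R_def by auto
    then obtain A where A: "\<And>i. A i \<in> P" "\<And>i. S i = I (A i)" by metis
    have "loeb_outer \<Omega> I v P X \<le> (\<Sum>i. v (A i))"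
      unfolding loeb_outer_def by (rule INF_lower) (use A S in auto)
    also have "\<dots> = (\<Sum>i. fR (S i))" using A fR_I by simp
    finally show "loeb_outer \<Omega> I v P X \<le> (\<Sum>i. fR (S i))" .
  qed
next
  show "OM X \<le> loeb_outer \<Omega> I v P X"
    unfolding loeb_outer_def
  proof (rule INF_greatest)
    fix A :: "nat \<Rightarrow> nat \<Rightarrow> 'x set" assume "A \<in> {A. range A \<subseteq> P \<and> X \<subseteq> (\<Union>i. I (A i))}"
    then have A: "range A \<subseteq> P" "X \<subseteq> (\<Union>i. I (A i))" by auto
    have "OM X \<le> (\<Sum>i. fR (I (A i)))"
      by (rule ring_of_sets.outer_measure_le[OF R_ring fR_pos fR_inc]) (use A in \<open>auto simp: R_def\<close>)
    also have "\<dots> = (\<Sum>i. v (A i))" using A(1) fR_I by (simp add: image_subset_iff)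
    finally show "OM X \<le> (\<Sum>i. v (A i))" .
  qed
qed

lemma L_eq: "L = measure_of \<Omega> R OM"
  unfolding L_def loeb_measure_def R_def[symmetric] using loeb_outer_eq by presburger

lemma sets_L: "sets L = sigma_sets \<Omega> R"
  unfolding L_eq by (rule sets_measure_of[OF R_Pow])

lemma space_L: "space L = \<Omega>"
  unfolding L_eq by (rule space_measure_of[OF R_Pow])

lemma emeasure_L: "X \<in> sets L \<Longrightarrow> emeasure L X = OM X"
  unfolding L_eq using O_ms by (simp add: emeasure_measure_of_conv sets_measure_of[OF R_Pow])

lemma I_in_L: "A \<in> P \<Longrightarrow> I A \<in> sets L"
  unfolding sets_L R_def by auto

lemma emeasure_L_I: "A \<in> P \<Longrightarrow> emeasure L (I A) = v A"
  using emeasure_L[OF I_in_L] ring_of_sets.outer_measure_agrees[OF R_ring fR_pos fR_ca, of "I A"]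
    fR_I by (auto simp: R_def)

lemma measure_L_I: "A \<in> P \<Longrightarrow> measure L (I A) = Lim \<alpha> (\<lambda>n. measure (N n) (A n))"
  unfolding measure_def[of L] using emeasure_L_I[of A] Lim_meas_nonneg[of A] by (simp add: v_def)

lemma prob_L: "prob_space L"
proof
  have "emeasure L (space L) = v (\<lambda>n. space (N n))"
    using emeasure_L_I[OF P_space'] I_space space_L by simp
  also have "\<dots> = 1" unfolding v_def
    using prob_space.prob_space[OF probN] by (simp add: Lim_const)
  finally show "emeasure L (space L) = 1" .
qed

end



lemma sum_single_nz:
  assumes "finite S" "j0 \<in> S" "\<And>j. j \<in> S \<Longrightarrow> j \<noteq> j0 \<Longrightarrow> f j = 0"
  shows "sum f S = f j0"
proof -
  have "sum f S = f j0 + sum f (S - {j0})" using sum.remove[OF assms(1,2)] .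
  moreover have "sum f (S - {j0}) = 0" using assms(3) by (intro sum.neutral) auto
  ultimately show ?thesis by simp
qed

context loeb
begin

lemma Lim_indicator:
  assumes "\<omega> \<in> \<Omega>" shows "Lim \<alpha> (\<lambda>n. indicator (A n) (r \<omega> n) :: real) = indicator (I A) \<omega>"
proof (cases "\<omega> \<in> I A")
  case True
  then have "eventually (\<lambda>n. r \<omega> n \<in> A n) \<alpha>" by (simp add: I_mem)
  then have "eventually (\<lambda>n. 1 = (indicator (A n) (r \<omega> n) :: real)) \<alpha>" by (rule eventually_mono) simp
  then have "Lim \<alpha> (\<lambda>n. 1::real) = Lim \<alpha> (\<lambda>n. indicator (A n) (r \<omega> n) :: real)"
    by (rule Lim_cong[OF ubdd_const])
  with True show ?thesis by (simp add: Lim_const)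
next
  case False
  then have "\<not> eventually (\<lambda>n. r \<omega> n \<in> A n) \<alpha>" using assms by (simp add: I_mem)
  then have "eventually (\<lambda>n. r \<omega> n \<notin> A n) \<alpha>" using ev_not_iff[of "\<lambda>n. r \<omega> n \<in> A n"] by simp
  then have "eventually (\<lambda>n. 0 = (indicator (A n) (r \<omega> n) :: real)) \<alpha>" by (rule eventually_mono) simp
  then have "Lim \<alpha> (\<lambda>n. 0::real) = Lim \<alpha> (\<lambda>n. indicator (A n) (r \<omega> n) :: real)"
    by (rule Lim_cong[OF ubdd_const])
  with False show ?thesis by (simp add: Lim_const)
qed

lemma ubdd_ind: "ubdd (\<lambda>n. indicator (A n) (x n) :: real)"
  by (rule ubdd_01) (simp_all add: indicator_def)

lemma loeb_integral:
  fixes \<phi> :: "nat \<Rightarrow> 'x \<Rightarrow> real"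
  assumes meas[measurable]: "\<And>n. \<phi> n \<in> borel_measurable (N n)"
    and bnd: "\<And>n x. x \<in> space (N n) \<Longrightarrow> 0 \<le> \<phi> n x \<and> \<phi> n x \<le> 1"
  shows "(\<lambda>\<omega>. Lim \<alpha> (\<lambda>n. \<phi> n (r \<omega> n))) \<in> borel_measurable L" (is "?\<Phi> \<in> _")
    and "integrable L (\<lambda>\<omega>. Lim \<alpha> (\<lambda>n. \<phi> n (r \<omega> n)))"
    and "(\<integral>\<omega>. Lim \<alpha> (\<lambda>n. \<phi> n (r \<omega> n)) \<partial>L) = Lim \<alpha> (\<lambda>n. \<integral>x. \<phi> n x \<partial>N n)"
proof -
  interpret L: prob_space L by (rule prob_L)
  have ub: "ubdd (\<lambda>n. \<phi> n (r \<omega> n))" if "\<omega> \<in> \<Omega>" for \<omega>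
    by (rule ubdd_01) (use bnd r_space[OF that] in auto)
  have Phi_bnd: "0 \<le> ?\<Phi> \<omega> \<and> ?\<Phi> \<omega> \<le> 1" if "\<omega> \<in> \<Omega>" for \<omega>
    using Lim_ge[OF ub[OF that], of 0] Lim_le[OF ub[OF that], of 1] bnd r_space[OF that] by auto
  have setP: "(\<lambda>n. {x \<in> space (N n). c < \<phi> n x}) \<in> P" for c
    unfolding P_def by measurable
  have lev: "{\<omega> \<in> \<Omega>. a < ?\<Phi> \<omega>} = (\<Union>m. I (\<lambda>n. {x \<in> space (N n). a + 1 / Suc m < \<phi> n x}))" for a
  proof (rule subset_antisym; rule subsetI)
    fix \<omega> assume "\<omega> \<in> {\<omega> \<in> \<Omega>. a < ?\<Phi> \<omega>}"
    then have w: "\<omega> \<in> \<Omega>" "a < ?\<Phi> \<omega>" by auto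
    then obtain m where m: "1 / real (Suc m) < ?\<Phi> \<omega> - a"
      using reals_Archimedean[of "?\<Phi> \<omega> - a"] by (auto simp: inverse_eq_divide)
    then have "eventually (\<lambda>n. a + 1 / Suc m < \<phi> n (r \<omega> n)) \<alpha>"
      using Lim_gt_ev[OF ub[OF w(1)]] by simp
    then show "\<omega> \<in> (\<Union>m. I (\<lambda>n. {x \<in> space (N n). a + 1 / Suc m < \<phi> n x}))"
      using w r_space[OF w(1)] by (auto simp: I_mem elim!: eventually_mono)
  next
    fix \<omega> assume "\<omega> \<in> (\<Union>m. I (\<lambda>n. {x \<in> space (N n). a + 1 / Suc m < \<phi> n x}))"
    then obtain m where wm: "\<omega> \<in> I (\<lambda>n. {x \<in> space (N n). a + 1 / Suc m < \<phi> n x})" by auto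
    then have "\<omega> \<in> \<Omega>" and ev: "eventually (\<lambda>n. a + 1 / Suc m < \<phi> n (r \<omega> n)) \<alpha>"
      by (auto simp: I_mem elim: eventually_mono)
    have "a + 1 / Suc m \<le> ?\<Phi> \<omega>"
      by (rule Lim_ge[OF ub[OF \<open>\<omega> \<in> \<Omega>\<close>]]) (use ev in \<open>auto elim: eventually_mono\<close>)
    moreover have "0 < 1 / real (Suc m)" by simp
    ultimately have "a < ?\<Phi> \<omega>" by linarith
    then show "\<omega> \<in> {\<omega> \<in> \<Omega>. a < ?\<Phi> \<omega>}" using \<open>\<omega> \<in> \<Omega>\<close> by simp
  qed
  show Phi_meas: "?\<Phi> \<in> borel_measurable L"
    unfolding borel_measurable_iff_greater space_L
  proof
    fix a
    show "{\<omega> \<in> \<Omega>. a < ?\<Phi> \<omega>} \<in> sets L"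
      unfolding lev using I_in_L[OF setP] by auto
  qed
  show Phi_int: "integrable L ?\<Phi>"
    by (rule L.integrable_const_bound[of _ 1]) (use Phi_bnd Phi_meas in \<open>auto simp: space_L\<close>)
  have approx: "\<bar>(\<integral>\<omega>. ?\<Phi> \<omega> \<partial>L) - Lim \<alpha> (\<lambda>n. \<integral>x. \<phi> n x \<partial>N n)\<bar> \<le> 2 / real k"
    if k: "1 \<le> k" for k :: nat
  proof -
    define kk where "kk = real k"
    have kk: "1 \<le> kk" using k by (simp add: kk_def)
    define E where "E j n = {x \<in> space (N n). real j \<le> kk * \<phi> n x \<and> kk * \<phi> n x < real j + 1}" for j n
    have E_sets[measurable]: "E j n \<in> sets (N n)" for j n
      unfolding E_def by measurable
    have EP: "(\<lambda>n. E j n) \<in> P" for j unfolding P_def by simp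
    define \<psi> where "\<psi> n x = (\<Sum>j\<le>k. (real j / kk) * indicator (E j n) x)" for n x
    have psi_meas[measurable]: "\<psi> n \<in> borel_measurable (N n)" for n
      unfolding \<psi>_def by measurable
    have psi_bnd: "\<psi> n x \<le> \<phi> n x \<and> \<phi> n x \<le> \<psi> n x + 1 / kk" if x: "x \<in> space (N n)" for n x
    proof -
      define t where "t = kk * \<phi> n x"
      have t0: "0 \<le> t" and tk: "t \<le> kk" using bnd[OF x] kk by (auto simp: t_def)
      define j0 where "j0 = nat \<lfloor>t\<rfloor>"
      have j0: "real j0 = of_int \<lfloor>t\<rfloor>" using t0 by (simp add: j0_def)
      have j0t: "real j0 \<le> t" "t < real j0 + 1" using j0 by linarith+
      have j0k: "j0 \<le> k" using j0t tk unfolding kk_def by linarith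
      have xE: "x \<in> E j0 n" using x j0t unfolding E_def t_def by auto
      have nE: "x \<notin> E j n" if "j \<noteq> j0" for j
      proof
        assume "x \<in> E j n"
        then have "real j \<le> t" "t < real j + 1" unfolding E_def t_def by auto
        with j0t have "j = j0" by linarith
        with that show False by simp
      qed
      have "\<psi> n x = real j0 / kk * indicator (E j0 n) x"
        unfolding \<psi>_def by (rule sum_single_nz) (use j0k nE in auto)
      then have "\<psi> n x = real j0 / kk" using xE by simp
      moreover have "real j0 / kk \<le> \<phi> n x" using j0t kk unfolding t_def by (simp add: divide_le_eq mult.commute)
      moreover have "\<phi> n x < real j0 / kk + 1 / kk" using j0t kk unfolding t_def
        by (simp add: add_divide_distrib[symmetric] less_divide_eq mult.commute)
      ultimately show ?thesis by simp
    qed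
    have psi_01: "0 \<le> \<psi> n x \<and> \<psi> n x \<le> 1" if "x \<in> space (N n)" for n x
    proof -
      have "0 \<le> \<psi> n x" unfolding \<psi>_def using kk by (intro sum_nonneg) auto
      with psi_bnd[OF that] bnd[OF that] show ?thesis by auto
    qed
    define \<Psi> where "\<Psi> \<omega> = (\<Sum>j\<le>k. (real j / kk) * indicator (I (\<lambda>n. E j n)) \<omega>)" for \<omega>
    have Psi_lim: "\<Psi> \<omega> = Lim \<alpha> (\<lambda>n. \<psi> n (r \<omega> n))" if "\<omega> \<in> \<Omega>" for \<omega>
    proof -
      have "Lim \<alpha> (\<lambda>n. \<psi> n (r \<omega> n)) = (\<Sum>j\<le>k. Lim \<alpha> (\<lambda>n. (real j / kk) * indicator (E j n) (r \<omega> n)))"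
        unfolding \<psi>_def by (rule Lim_sum) (intro ubdd_mult ubdd_const ubdd_ind)
      also have "\<dots> = \<Psi> \<omega>" unfolding \<Psi>_def
        by (intro sum.cong refl) (subst Lim_cmult[OF ubdd_ind], simp only: Lim_indicator[OF that])
      finally show ?thesis by simp
    qed
    have Psi_meas[measurable]: "\<Psi> \<in> borel_measurable L"
      unfolding \<Psi>_def using I_in_L[OF EP] by measurable
    have ub_psi: "ubdd (\<lambda>n. \<psi> n (r \<omega> n))" if "\<omega> \<in> \<Omega>" for \<omega>
      by (rule ubdd_01) (use psi_01 r_space[OF that] in auto)
    have Psi_Phi: "\<Psi> \<omega> \<le> ?\<Phi> \<omega> \<and> ?\<Phi> \<omega> \<le> \<Psi> \<omega> + 1 / kk" if w: "\<omega> \<in> \<Omega>" for \<omega>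
    proof -
      have "Lim \<alpha> (\<lambda>n. \<psi> n (r \<omega> n)) \<le> ?\<Phi> \<omega>"
        by (rule Lim_mono[OF ub_psi[OF w] ub[OF w]]) (use psi_bnd r_space[OF w] in auto)
      moreover have "?\<Phi> \<omega> \<le> Lim \<alpha> (\<lambda>n. \<psi> n (r \<omega> n) + 1 / kk)"
        by (rule Lim_mono[OF ub[OF w] ubdd_add[OF ub_psi[OF w] ubdd_const]]) (use psi_bnd r_space[OF w] in auto)
      moreover have "Lim \<alpha> (\<lambda>n. \<psi> n (r \<omega> n) + 1 / kk) = Lim \<alpha> (\<lambda>n. \<psi> n (r \<omega> n)) + 1 / kk"
        using Lim_add[OF ub_psi[OF w] ubdd_const] by (simp add: Lim_const)
      ultimately show ?thesis using Psi_lim[OF w] by simp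
    qed
    have Psi_int: "integrable L \<Psi>"
      unfolding \<Psi>_def by (intro Bochner_Integration.integrable_sum integrable_mult_right integrable_real_indicator)
         (use I_in_L[OF EP] in \<open>auto simp: L.emeasure_eq_measure\<close>)
    have int_Psi: "(\<integral>\<omega>. \<Psi> \<omega> \<partial>L) = (\<Sum>j\<le>k. (real j / kk) * Lim \<alpha> (\<lambda>n. measure (N n) (E j n)))"
    proof -
      have "(\<integral>\<omega>. \<Psi> \<omega> \<partial>L) = (\<Sum>j\<le>k. (real j / kk) * measure L (I (\<lambda>n. E j n)))"
        unfolding \<Psi>_def
        by (subst Bochner_Integration.integral_sum)
           (use I_in_L[OF EP] in \<open>auto intro!: integrable_mult_right integrable_real_indicator simp: L.emeasure_eq_measure\<close>)
      also have "\<dots> = (\<Sum>j\<le>k. (real j / kk) * Lim \<alpha> (\<lambda>n. measure (N n) (E j n)))"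
        using measure_L_I[OF EP] by simp
      finally show ?thesis .
    qed
    have int_psi: "(\<integral>x. \<psi> n x \<partial>N n) = (\<Sum>j\<le>k. (real j / kk) * measure (N n) (E j n))" for n
    proof -
      interpret Nn: prob_space "N n" by (rule probN)
      show ?thesis unfolding \<psi>_def
        by (subst Bochner_Integration.integral_sum)
           (auto intro!: integrable_mult_right integrable_real_indicator simp: Nn.emeasure_eq_measure)
    qed
    have Lim_psi: "Lim \<alpha> (\<lambda>n. \<integral>x. \<psi> n x \<partial>N n) = (\<integral>\<omega>. \<Psi> \<omega> \<partial>L)"
      unfolding int_psi int_Psi
    proof (subst Lim_sum)
      show "ubdd (\<lambda>n. real j / kk * measure (N n) (E j n))" for j
        by (intro ubdd_mult ubdd_const ubdd_meas)
      show "(\<Sum>j\<le>k. Lim \<alpha> (\<lambda>n. real j / kk * measure (N n) (E j n))) =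
        (\<Sum>j\<le>k. real j / kk * Lim \<alpha> (\<lambda>n. measure (N n) (E j n)))"
        by (intro sum.cong refl Lim_cmult ubdd_meas)
    qed
    have i1: "(\<integral>\<omega>. \<Psi> \<omega> \<partial>L) \<le> (\<integral>\<omega>. ?\<Phi> \<omega> \<partial>L)"
      by (rule integral_mono[OF Psi_int Phi_int]) (use Psi_Phi in \<open>auto simp: space_L\<close>)
    have i2: "(\<integral>\<omega>. ?\<Phi> \<omega> \<partial>L) \<le> (\<integral>\<omega>. \<Psi> \<omega> + 1 / kk \<partial>L)"
      by (rule integral_mono[OF Phi_int]) (use Psi_Phi Psi_int in \<open>auto simp: space_L\<close>)
    have i2': "(\<integral>\<omega>. \<Psi> \<omega> + 1 / kk \<partial>L) = (\<integral>\<omega>. \<Psi> \<omega> \<partial>L) + 1 / kk"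
      using Psi_int by (simp add: L.prob_space)
    have int_phi_int: "integrable (N n) (\<phi> n)" for n
      by (rule finite_measure.integrable_const_bound[OF prob_space.axioms(1)[OF probN], of _ 1])
         (use bnd in auto)
    have int_psi_int: "integrable (N n) (\<psi> n)" for n
      by (rule finite_measure.integrable_const_bound[OF prob_space.axioms(1)[OF probN], of _ 1])
         (use psi_01 in auto)
    have j1: "(\<integral>x. \<psi> n x \<partial>N n) \<le> (\<integral>x. \<phi> n x \<partial>N n)" for n
      by (rule integral_mono[OF int_psi_int int_phi_int]) (use psi_bnd in auto)
    have j2: "(\<integral>x. \<phi> n x \<partial>N n) \<le> (\<integral>x. \<psi> n x \<partial>N n) + 1 / kk" for n
    proof -
      interpret Nn: prob_space "N n" by (rule probN)
      have "(\<integral>x. \<phi> n x \<partial>N n) \<le> (\<integral>x. \<psi> n x + 1 / kk \<partial>N n)"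
        by (rule integral_mono[OF int_phi_int]) (use psi_bnd int_psi_int in \<open>auto intro!: Bochner_Integration.integrable_add\<close>)
      also have "\<dots> = (\<integral>x. \<psi> n x \<partial>N n) + 1 / kk"
        using int_psi_int prob_space.prob_space[OF probN] by (simp add: measure_def)
      finally show ?thesis .
    qed
    have ubphi: "ubdd (\<lambda>n. \<integral>x. \<phi> n x \<partial>N n)"
    proof (rule ubdd_01)
      fix n
      interpret Nn: prob_space "N n" by (rule probN)
      show "0 \<le> (\<integral>x. \<phi> n x \<partial>N n)" by (rule Bochner_Integration.integral_nonneg) (use bnd in auto)
      have "(\<integral>x. \<phi> n x \<partial>N n) \<le> (\<integral>x. 1 \<partial>N n)"
        by (rule integral_mono[OF int_phi_int]) (use bnd in auto)
      then show "(\<integral>x. \<phi> n x \<partial>N n) \<le> 1" by (simp add: Nn.prob_space)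
    qed
    have ubpsi: "ubdd (\<lambda>n. \<integral>x. \<psi> n x \<partial>N n)"
    proof (rule ubdd_01)
      fix n
      interpret Nn: prob_space "N n" by (rule probN)
      show "0 \<le> (\<integral>x. \<psi> n x \<partial>N n)" by (rule Bochner_Integration.integral_nonneg) (use psi_01 in auto)
      have "(\<integral>x. \<psi> n x \<partial>N n) \<le> (\<integral>x. 1 \<partial>N n)"
        by (rule integral_mono[OF int_psi_int]) (use psi_01 in auto)
      then show "(\<integral>x. \<psi> n x \<partial>N n) \<le> 1" by (simp add: Nn.prob_space)
    qed
    have l1: "Lim \<alpha> (\<lambda>n. \<integral>x. \<psi> n x \<partial>N n) \<le> Lim \<alpha> (\<lambda>n. \<integral>x. \<phi> n x \<partial>N n)"
      by (rule Lim_mono[OF ubpsi ubphi]) (use j1 in auto)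
    have l2: "Lim \<alpha> (\<lambda>n. \<integral>x. \<phi> n x \<partial>N n) \<le> Lim \<alpha> (\<lambda>n. \<integral>x. \<psi> n x \<partial>N n) + 1 / kk"
    proof -
      have "Lim \<alpha> (\<lambda>n. \<integral>x. \<phi> n x \<partial>N n) \<le> Lim \<alpha> (\<lambda>n. (\<integral>x. \<psi> n x \<partial>N n) + 1 / kk)"
        by (rule Lim_mono[OF ubphi ubdd_add[OF ubpsi ubdd_const]]) (use j2 in auto)
      also have "\<dots> = Lim \<alpha> (\<lambda>n. \<integral>x. \<psi> n x \<partial>N n) + 1 / kk"
        using Lim_add[OF ubpsi ubdd_const] by (simp add: Lim_const)
      finally show ?thesis .
    qed
    have "2 / real k = 1 / kk + 1 / kk" by (simp add: kk_def)
    then show ?thesis using i1 i2 i2' l1 l2 Lim_psi by linarith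
  qed
  show "(\<integral>\<omega>. ?\<Phi> \<omega> \<partial>L) = Lim \<alpha> (\<lambda>n. \<integral>x. \<phi> n x \<partial>N n)"
  proof (rule ccontr)
    define d where "d = \<bar>(\<integral>\<omega>. ?\<Phi> \<omega> \<partial>L) - Lim \<alpha> (\<lambda>n. \<integral>x. \<phi> n x \<partial>N n)\<bar>"
    assume "(\<integral>\<omega>. ?\<Phi> \<omega> \<partial>L) \<noteq> Lim \<alpha> (\<lambda>n. \<integral>x. \<phi> n x \<partial>N n)"
    then have "0 < d" unfolding d_def by simp
    then obtain m where m: "inverse (real (Suc m)) < d / 2" using reals_Archimedean[of "d/2"] by auto
    have "d \<le> 2 / real (Suc m)" using approx[of "Suc m"] unfolding d_def by simp
    with m show False by (simp add: field_simps)
  qed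
qed

end


locale ugrp = ultra +
  fixes G :: "nat \<Rightarrow> 'a monoid" and M :: "nat \<Rightarrow> 'a measure" and M2 :: "nat \<Rightarrow> ('a \<times> 'a) measure"
  assumes pg: "\<And>n. prob_group (G n) (M n) (M2 n)"
begin

abbreviation "Q \<equiv> useqs G // urel \<alpha> G"
definition "rep X = (SOME x. x \<in> X)"
abbreviation "UG \<equiv> ultraprod_group \<alpha> G"
abbreviation "cls \<equiv> uclass \<alpha> G"

lemma grp: "group (G n)" using pg[of n] unfolding prob_group_def by blast
lemma space_M: "space (M n) = carrier (G n)" using pg[of n] unfolding prob_group_def by blast
lemma space_M2: "space (M2 n) = carrier (G n) \<times> carrier (G n)" using pg[of n] unfolding prob_group_def by blast
lemma prob_M: "prob_space (M n)" using pg[of n] unfolding prob_group_def by blast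
lemma prob_M2: "prob_space (M2 n)" using pg[of n] unfolding prob_group_def by blast
lemma pair_sets: "sets (M n \<Otimes>\<^sub>M M n) \<subseteq> sets (M2 n)" using pg[of n] unfolding prob_group_def by blast
lemma pair_emeas: "A \<in> sets (M n \<Otimes>\<^sub>M M n) \<Longrightarrow> emeasure (M2 n) A = emeasure (M n \<Otimes>\<^sub>M M n) A"
  using pg[of n] unfolding prob_group_def by blast
lemma mult_meas: "(\<lambda>(x, y). x \<otimes>\<^bsub>G n\<^esub> y) \<in> M2 n \<rightarrow>\<^sub>M M n" using pg[of n] unfolding prob_group_def by blast
lemma inv_meas: "(\<lambda>x. inv\<^bsub>G n\<^esub> x) \<in> M n \<rightarrow>\<^sub>M M n" using pg[of n] unfolding prob_group_def by blast
lemma lt_pres: "g \<in> carrier (G n) \<Longrightarrow> meas_pres (M n) (M n) (\<lambda>x. g \<otimes>\<^bsub>G n\<^esub> x)"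
  using pg[of n] unfolding prob_group_def by blast
lemma rt_pres: "g \<in> carrier (G n) \<Longrightarrow> meas_pres (M n) (M n) (\<lambda>x. x \<otimes>\<^bsub>G n\<^esub> g)"
  using pg[of n] unfolding prob_group_def by blast
lemma inv_pres: "meas_pres (M n) (M n) (\<lambda>x. inv\<^bsub>G n\<^esub> x)"
  using pg[of n] unfolding prob_group_def by blast
lemma fub: "fubini_prop (M n) (M2 n)" using pg[of n] unfolding prob_group_def by blast

lemma useqs_iff: "x \<in> useqs G \<longleftrightarrow> (\<forall>n. x n \<in> carrier (G n))"
  unfolding useqs_def by simp

lemma equiv_urel: "equiv (useqs G) (urel \<alpha> G)"
proof (rule equivI)
  show "urel \<alpha> G \<subseteq> useqs G \<times> useqs G" unfolding urel_def by auto
  show "refl_on (useqs G) (urel \<alpha> G)" unfolding refl_on_def urel_def by auto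
  show "sym (urel \<alpha> G)" unfolding sym_def urel_def by (auto elim: eventually_mono)
  show "trans (urel \<alpha> G)"
  proof (rule transI)
    fix a b c assume "(a, b) \<in> urel \<alpha> G" "(b, c) \<in> urel \<alpha> G"
    then have h: "a \<in> useqs G" "c \<in> useqs G" "eventually (\<lambda>n. a n = b n) \<alpha>" "eventually (\<lambda>n. b n = c n) \<alpha>"
      unfolding urel_def by auto
    from h(3,4) have "eventually (\<lambda>n. a n = c n) \<alpha>" by eventually_elim simp
    with h show "(a, c) \<in> urel \<alpha> G" unfolding urel_def by simp
  qed
qed

lemma cls_mem: "y \<in> cls x \<longleftrightarrow> x \<in> useqs G \<and> y \<in> useqs G \<and> eventually (\<lambda>n. x n = y n) \<alpha>"
  unfolding uclass_def urel_def by auto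

lemma cls_Q: "x \<in> useqs G \<Longrightarrow> cls x \<in> Q"
  unfolding uclass_def by (rule quotientI)

lemma Q_cls: "X \<in> Q \<Longrightarrow> \<exists>x\<in>useqs G. X = cls x"
  unfolding uclass_def by (erule quotientE) auto

lemma cls_eq: "x \<in> useqs G \<Longrightarrow> y \<in> useqs G \<Longrightarrow> eventually (\<lambda>n. x n = y n) \<alpha> \<Longrightarrow> cls x = cls y"
  unfolding uclass_def by (rule equiv_class_eq[OF equiv_urel]) (simp add: urel_def)

lemma rep_in: "X \<in> Q \<Longrightarrow> rep X \<in> X"
proof -
  assume "X \<in> Q"
  then obtain x where x: "x \<in> useqs G" "X = cls x" using Q_cls by blast
  have "x \<in> cls x" using x(1) cls_mem[of x x] by simp
  then have "x \<in> X" using x(2) by simp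
  then show ?thesis unfolding rep_def by (rule someI[of "\<lambda>x. x \<in> X"])
qed

lemma same_class: "X \<in> Q \<Longrightarrow> x \<in> X \<Longrightarrow> y \<in> X \<Longrightarrow> eventually (\<lambda>n. x n = y n) \<alpha>"
proof -
  assume "X \<in> Q" "x \<in> X" "y \<in> X"
  moreover obtain z where "z \<in> useqs G" "X = cls z" using Q_cls \<open>X \<in> Q\<close> by blast
  ultimately have "eventually (\<lambda>n. z n = x n) \<alpha>" "eventually (\<lambda>n. z n = y n) \<alpha>" using cls_mem by simp_all
  then show ?thesis by eventually_elim simp
qed

lemma Q_useqs: "X \<in> Q \<Longrightarrow> x \<in> X \<Longrightarrow> x \<in> useqs G"
proof -
  assume "X \<in> Q" "x \<in> X"
  moreover obtain z where "z \<in> useqs G" "X = cls z" using Q_cls \<open>X \<in> Q\<close> by blast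
  ultimately show ?thesis using cls_mem by simp
qed

lemma rep_useqs: "X \<in> Q \<Longrightarrow> rep X \<in> useqs G"
  using rep_in Q_useqs by blast

lemma rep_carrier: "X \<in> Q \<Longrightarrow> rep X n \<in> carrier (G n)"
  using rep_useqs unfolding useqs_iff by simp

lemma rep_cls: "x \<in> useqs G \<Longrightarrow> eventually (\<lambda>n. rep (cls x) n = x n) \<alpha>"
proof -
  assume x: "x \<in> useqs G"
  have xx: "x \<in> cls x" using x cls_mem[of x x] by simp
  have "rep (cls x) \<in> cls x" using rep_in[OF cls_Q[OF x]] .
  from same_class[OF cls_Q[OF x] this xx] show ?thesis .
qed

lemma Q_eq: "X \<in> Q \<Longrightarrow> Y \<in> Q \<Longrightarrow> eventually (\<lambda>n. rep X n = rep Y n) \<alpha> \<Longrightarrow> X = Y"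
proof -
  assume XY: "X \<in> Q" "Y \<in> Q" and e: "eventually (\<lambda>n. rep X n = rep Y n) \<alpha>"
  obtain x where x: "x \<in> useqs G" "X = cls x" using Q_cls[OF XY(1)] by blast
  obtain y where y: "y \<in> useqs G" "Y = cls y" using Q_cls[OF XY(2)] by blast
  note xy = x y
  have xX: "x \<in> X" using x cls_mem[of x x] by simp
  have yY: "y \<in> Y" using y cls_mem[of y y] by simp
  have "eventually (\<lambda>n. x n = rep X n) \<alpha>" "eventually (\<lambda>n. y n = rep Y n) \<alpha>"
    using same_class[OF XY(1) xX rep_in[OF XY(1)]] same_class[OF XY(2) yY rep_in[OF XY(2)]] .
  with e have "eventually (\<lambda>n. x n = y n) \<alpha>" by eventually_elim simp
  from cls_eq[OF x(1) y(1) this] show ?thesis using x(2) y(2) by simp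
qed

lemma ev_rep_mem: "X \<in> Q \<Longrightarrow> (\<exists>x\<in>X. eventually (\<lambda>n. P n (x n)) \<alpha>) \<longleftrightarrow> eventually (\<lambda>n. P n (rep X n)) \<alpha>"
proof
  assume X: "X \<in> Q" and "\<exists>x\<in>X. eventually (\<lambda>n. P n (x n)) \<alpha>"
  then obtain x where x: "x \<in> X" "eventually (\<lambda>n. P n (x n)) \<alpha>" by blast
  have "eventually (\<lambda>n. x n = rep X n) \<alpha>" using same_class[OF X x(1) rep_in[OF X]] .
  with x(2) show "eventually (\<lambda>n. P n (rep X n)) \<alpha>" by eventually_elim simp
next
  assume "X \<in> Q" "eventually (\<lambda>n. P n (rep X n)) \<alpha>"
  then show "\<exists>x\<in>X. eventually (\<lambda>n. P n (x n)) \<alpha>" using rep_in by blast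
qed

lemma carrier_UG: "carrier UG = Q" unfolding ultraprod_group_def by simp
lemma mult_UG: "X \<otimes>\<^bsub>UG\<^esub> Y = cls (\<lambda>n. rep X n \<otimes>\<^bsub>G n\<^esub> rep Y n)"
  unfolding ultraprod_group_def rep_def by simp
lemma one_UG: "\<one>\<^bsub>UG\<^esub> = cls (\<lambda>n. \<one>\<^bsub>G n\<^esub>)"
  unfolding ultraprod_group_def by simp

lemma mult_useqs: "X \<in> Q \<Longrightarrow> Y \<in> Q \<Longrightarrow> (\<lambda>n. rep X n \<otimes>\<^bsub>G n\<^esub> rep Y n) \<in> useqs G"
  using rep_carrier monoid.m_closed[OF group.is_monoid[OF grp]] by (simp add: useqs_iff)

lemma one_useqs: "(\<lambda>n. \<one>\<^bsub>G n\<^esub>) \<in> useqs G"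
  using monoid.one_closed[OF group.is_monoid[OF grp]] by (simp add: useqs_iff)

lemma inv_useqs: "X \<in> Q \<Longrightarrow> (\<lambda>n. inv\<^bsub>G n\<^esub> rep X n) \<in> useqs G"
  using rep_carrier group.inv_closed[OF grp] by (simp add: useqs_iff)

lemma mult_Q: "X \<in> Q \<Longrightarrow> Y \<in> Q \<Longrightarrow> X \<otimes>\<^bsub>UG\<^esub> Y \<in> Q"
  unfolding mult_UG by (rule cls_Q[OF mult_useqs])

lemma rep_mult: "X \<in> Q \<Longrightarrow> Y \<in> Q \<Longrightarrow> eventually (\<lambda>n. rep (X \<otimes>\<^bsub>UG\<^esub> Y) n = rep X n \<otimes>\<^bsub>G n\<^esub> rep Y n) \<alpha>"
  unfolding mult_UG by (rule rep_cls[OF mult_useqs])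

lemma one_Q: "\<one>\<^bsub>UG\<^esub> \<in> Q" unfolding one_UG by (rule cls_Q[OF one_useqs])

lemma rep_one: "eventually (\<lambda>n. rep \<one>\<^bsub>UG\<^esub> n = \<one>\<^bsub>G n\<^esub>) \<alpha>"
  unfolding one_UG by (rule rep_cls[OF one_useqs])

lemma group_UG: "group UG"
proof (rule groupI, unfold carrier_UG)
  fix X Y assume "X \<in> Q" "Y \<in> Q" then show "X \<otimes>\<^bsub>UG\<^esub> Y \<in> Q" by (rule mult_Q)
next
  show "\<one>\<^bsub>UG\<^esub> \<in> Q" by (rule one_Q)
next
  fix X Y Z assume XYZ: "X \<in> Q" "Y \<in> Q" "Z \<in> Q"
  show "X \<otimes>\<^bsub>UG\<^esub> Y \<otimes>\<^bsub>UG\<^esub> Z = X \<otimes>\<^bsub>UG\<^esub> (Y \<otimes>\<^bsub>UG\<^esub> Z)"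
  proof (rule Q_eq)
    show "X \<otimes>\<^bsub>UG\<^esub> Y \<otimes>\<^bsub>UG\<^esub> Z \<in> Q" "X \<otimes>\<^bsub>UG\<^esub> (Y \<otimes>\<^bsub>UG\<^esub> Z) \<in> Q" using XYZ mult_Q by auto
    show "eventually (\<lambda>n. rep (X \<otimes>\<^bsub>UG\<^esub> Y \<otimes>\<^bsub>UG\<^esub> Z) n = rep (X \<otimes>\<^bsub>UG\<^esub> (Y \<otimes>\<^bsub>UG\<^esub> Z)) n) \<alpha>"
      using rep_mult[OF mult_Q[OF XYZ(1,2)] XYZ(3)] rep_mult[OF XYZ(1) mult_Q[OF XYZ(2,3)]]
        rep_mult[OF XYZ(1,2)] rep_mult[OF XYZ(2,3)]
    proof eventually_elim
      case (elim n)
      then show ?case using monoid.m_assoc[OF group.is_monoid[OF grp] rep_carrier[OF XYZ(1)] rep_carrier[OF XYZ(2)] rep_carrier[OF XYZ(3)]]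
        by simp
    qed
  qed
next
  fix X assume X: "X \<in> Q"
  show "\<one>\<^bsub>UG\<^esub> \<otimes>\<^bsub>UG\<^esub> X = X"
  proof (rule Q_eq[OF mult_Q[OF one_Q X] X])
    show "eventually (\<lambda>n. rep (\<one>\<^bsub>UG\<^esub> \<otimes>\<^bsub>UG\<^esub> X) n = rep X n) \<alpha>"
      using rep_mult[OF one_Q X] rep_one
    proof eventually_elim
      case (elim n)
      then show ?case using monoid.l_one[OF group.is_monoid[OF grp] rep_carrier[OF X]] by simp
    qed
  qed
next
  fix X assume X: "X \<in> Q"
  let ?Y = "cls (\<lambda>n. inv\<^bsub>G n\<^esub> rep X n)"
  have Y: "?Y \<in> Q" by (rule cls_Q[OF inv_useqs[OF X]])
  have "?Y \<otimes>\<^bsub>UG\<^esub> X = \<one>\<^bsub>UG\<^esub>"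
  proof (rule Q_eq[OF mult_Q[OF Y X] one_Q])
    show "eventually (\<lambda>n. rep (?Y \<otimes>\<^bsub>UG\<^esub> X) n = rep \<one>\<^bsub>UG\<^esub> n) \<alpha>"
      using rep_mult[OF Y X] rep_one rep_cls[OF inv_useqs[OF X]]
    proof eventually_elim
      case (elim n)
      then show ?case using group.l_inv[OF grp rep_carrier[OF X]] by simp
    qed
  qed
  with Y show "\<exists>Y\<in>Q. Y \<otimes>\<^bsub>UG\<^esub> X = \<one>\<^bsub>UG\<^esub>" by blast
qed

lemma inv_UG: "X \<in> Q \<Longrightarrow> inv\<^bsub>UG\<^esub> X = cls (\<lambda>n. inv\<^bsub>G n\<^esub> rep X n)"
proof -
  assume X: "X \<in> Q"
  let ?Y = "cls (\<lambda>n. inv\<^bsub>G n\<^esub> rep X n)"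
  have Y: "?Y \<in> Q" by (rule cls_Q[OF inv_useqs[OF X]])
  have "?Y \<otimes>\<^bsub>UG\<^esub> X = \<one>\<^bsub>UG\<^esub>"
  proof (rule Q_eq[OF mult_Q[OF Y X] one_Q])
    show "eventually (\<lambda>n. rep (?Y \<otimes>\<^bsub>UG\<^esub> X) n = rep \<one>\<^bsub>UG\<^esub> n) \<alpha>"
      using rep_mult[OF Y X] rep_one rep_cls[OF inv_useqs[OF X]]
    proof eventually_elim
      case (elim n)
      then show ?case using group.l_inv[OF grp rep_carrier[OF X]] by simp
    qed
  qed
  then show ?thesis using group.inv_equality[OF group_UG] X Y by (simp add: carrier_UG)
qed

lemma inv_Q: "X \<in> Q \<Longrightarrow> inv\<^bsub>UG\<^esub> X \<in> Q"
  using group.inv_closed[OF group_UG] by (simp add: carrier_UG)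

lemma rep_inv: "X \<in> Q \<Longrightarrow> eventually (\<lambda>n. rep (inv\<^bsub>UG\<^esub> X) n = inv\<^bsub>G n\<^esub> rep X n) \<alpha>"
  using inv_UG rep_cls[OF inv_useqs] by simp

definition "r2 Z = (\<lambda>n. (rep (fst Z) n, rep (snd Z) n))"

sublocale L1: loeb \<alpha> Q rep M "internal1 \<alpha> G"
proof (rule loeb.intro[OF ultra_axioms], rule loeb_axioms.intro)
  show "internal1 \<alpha> G A = {\<omega> \<in> Q. eventually (\<lambda>n. rep \<omega> n \<in> A n) \<alpha>}" for A
    unfolding internal1_def using ev_rep_mem[of _ "\<lambda>n x. x \<in> A n"] by auto
  show "rep \<omega> n \<in> space (M n)" if "\<omega> \<in> Q" for \<omega> n
    using rep_carrier[OF that] space_M by simp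
  show "\<exists>\<omega>\<in>Q. eventually (\<lambda>n. rep \<omega> n = x n) \<alpha>" if "\<And>n. x n \<in> space (M n)" for x
  proof -
    have x: "x \<in> useqs G" using that space_M by (simp add: useqs_iff)
    show ?thesis using cls_Q[OF x] rep_cls[OF x] by blast
  qed
  show "prob_space (M n)" for n by (rule prob_M)
qed

sublocale L2: loeb \<alpha> "Q \<times> Q" r2 M2 "internal2 \<alpha> G"
proof (rule loeb.intro[OF ultra_axioms], rule loeb_axioms.intro)
  show "internal2 \<alpha> G C = {\<omega> \<in> Q \<times> Q. eventually (\<lambda>n. r2 \<omega> n \<in> C n) \<alpha>}" for C
  proof (rule subset_antisym; rule subsetI)
    fix Z assume "Z \<in> internal2 \<alpha> G C"
    then obtain X Y x y where Z: "Z = (X, Y)" "X \<in> Q" "Y \<in> Q" "x \<in> X" "y \<in> Y"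
      and e: "eventually (\<lambda>n. (x n, y n) \<in> C n) \<alpha>"
      unfolding internal2_def by auto
    have "eventually (\<lambda>n. x n = rep X n) \<alpha>" "eventually (\<lambda>n. y n = rep Y n) \<alpha>"
      using same_class Z rep_in by auto
    with e have "eventually (\<lambda>n. r2 Z n \<in> C n) \<alpha>" unfolding r2_def Z(1) by eventually_elim simp
    with Z show "Z \<in> {\<omega> \<in> Q \<times> Q. eventually (\<lambda>n. r2 \<omega> n \<in> C n) \<alpha>}" by auto
  next
    fix Z assume "Z \<in> {\<omega> \<in> Q \<times> Q. eventually (\<lambda>n. r2 \<omega> n \<in> C n) \<alpha>}"
    then obtain X Y where Z: "Z = (X, Y)" "X \<in> Q" "Y \<in> Q" "eventually (\<lambda>n. (rep X n, rep Y n) \<in> C n) \<alpha>"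
      unfolding r2_def by auto
    then show "Z \<in> internal2 \<alpha> G C" unfolding internal2_def using rep_in by blast
  qed
  show "r2 \<omega> n \<in> space (M2 n)" if "\<omega> \<in> Q \<times> Q" for \<omega> n
    using rep_carrier that space_M2 unfolding r2_def by auto
  show "\<exists>\<omega>\<in>Q \<times> Q. eventually (\<lambda>n. r2 \<omega> n = x n) \<alpha>" if "\<And>n. x n \<in> space (M2 n)" for x
  proof -
    have x1: "(\<lambda>n. fst (x n)) \<in> useqs G" and x2: "(\<lambda>n. snd (x n)) \<in> useqs G"
      using that space_M2 by (auto simp: useqs_iff mem_Times_iff)
    have "eventually (\<lambda>n. r2 (cls (\<lambda>n. fst (x n)), cls (\<lambda>n. snd (x n))) n = x n) \<alpha>"
      using rep_cls[OF x1] rep_cls[OF x2] unfolding r2_def by eventually_elim (simp add: prod_eq_iff)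
    then show ?thesis using cls_Q[OF x1] cls_Q[OF x2] by blast
  qed
  show "prob_space (M2 n)" for n by (rule prob_M2)
qed

lemma um_eq: "ultra_measure \<alpha> G M = L1.L"
  unfolding ultra_measure_def L1.L_def L1.v_def L1.P_def ..

lemma um2_eq: "ultra_measure2 \<alpha> G M2 = L2.L"
  unfolding ultra_measure2_def L2.L_def L2.v_def L2.P_def ..

end


context ugrp
begin

lemma I1_mem: "X \<in> internal1 \<alpha> G A \<longleftrightarrow> X \<in> Q \<and> eventually (\<lambda>n. rep X n \<in> A n) \<alpha>"
  by (rule L1.I_mem)

lemma I2_mem: "Z \<in> internal2 \<alpha> G C \<longleftrightarrow> Z \<in> Q \<times> Q \<and> eventually (\<lambda>n. (rep (fst Z) n, rep (snd Z) n) \<in> C n) \<alpha>"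
  using L2.I_mem unfolding r2_def by simp

lemma ev_meas_eq: "meas_pres N N f \<Longrightarrow> A \<in> sets N \<Longrightarrow> measure N (f -` A \<inter> space N) = measure N A"
  unfolding meas_pres_def measure_def by simp

lemma pres_lemma:
  assumes F: "\<And>X. X \<in> Q \<Longrightarrow> F X \<in> Q"
    and f: "\<And>n. meas_pres (M n) (M n) (f n)"
    and e: "\<And>X. X \<in> Q \<Longrightarrow> eventually (\<lambda>n. rep (F X) n = f n (rep X n)) \<alpha>"
  shows "meas_pres L1.L L1.L F"
proof -
  have fm: "f n \<in> M n \<rightarrow>\<^sub>M M n" for n using f unfolding meas_pres_def by simp
  have preP: "(\<lambda>n. f n -` A n \<inter> space (M n)) \<in> L1.P" if "A \<in> L1.P" for A
    using that measurable_sets[OF fm] unfolding L1.P_def by auto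
  have pre: "F -` internal1 \<alpha> G A \<inter> Q = internal1 \<alpha> G (\<lambda>n. f n -` A n \<inter> space (M n))" for A
  proof (rule Set.set_eqI)
    fix X
    show "X \<in> F -` internal1 \<alpha> G A \<inter> Q \<longleftrightarrow> X \<in> internal1 \<alpha> G (\<lambda>n. f n -` A n \<inter> space (M n))"
    proof (cases "X \<in> Q")
      case True
      have sp: "rep X n \<in> space (M n)" for n using L1.r_space[OF True] .
      have "eventually (\<lambda>n. rep (F X) n \<in> A n) \<alpha> \<longleftrightarrow> eventually (\<lambda>n. f n (rep X n) \<in> A n) \<alpha>"
      proof
        assume "eventually (\<lambda>n. rep (F X) n \<in> A n) \<alpha>"
        with e[OF True] show "eventually (\<lambda>n. f n (rep X n) \<in> A n) \<alpha>" by eventually_elim simp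
      next
        assume "eventually (\<lambda>n. f n (rep X n) \<in> A n) \<alpha>"
        with e[OF True] show "eventually (\<lambda>n. rep (F X) n \<in> A n) \<alpha>" by eventually_elim simp
      qed
      then show ?thesis using True F[OF True] sp by (simp add: I1_mem)
    next
      case False then show ?thesis by (simp add: I1_mem)
    qed
  qed
  have Fm: "F \<in> L1.L \<rightarrow>\<^sub>M L1.L"
  proof (rule measurable_sigma_sets[OF L1.sets_L L1.R_Pow])
    show "F \<in> space L1.L \<rightarrow> Q" using F L1.space_L by auto
    fix y assume "y \<in> L1.R"
    then obtain A where A: "A \<in> L1.P" "y = internal1 \<alpha> G A" unfolding L1.R_def by auto
    show "F -` y \<inter> space L1.L \<in> sets L1.L"
      using pre[of A] L1.I_in_L[OF preP[OF A(1)]] A(2) L1.space_L by simp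
  qed
  have D: "distr L1.L L1.L F = L1.L"
  proof (rule measure_eqI_generator_eq[OF L1.R_Int_stable L1.R_Pow])
    show "sets (distr L1.L L1.L F) = sigma_sets Q L1.R" by (simp add: L1.sets_L)
    show "sets L1.L = sigma_sets Q L1.R" by (rule L1.sets_L)
    show "range (\<lambda>i. Q) \<subseteq> L1.R" using L1.R_top by auto
    show "(\<Union>i. Q) = Q" by simp
    show "emeasure (distr L1.L L1.L F) Q \<noteq> \<infinity>" for i :: nat
    proof -
      interpret P1: prob_space L1.L by (rule L1.prob_L)
      have "Q \<in> sets L1.L" using sets.top[of L1.L] L1.space_L by simp
      then show ?thesis using emeasure_distr[OF Fm] P1.emeasure_finite by simp
    qed
  next
    fix X assume "X \<in> L1.R"
    then obtain A where A: "A \<in> L1.P" "X = internal1 \<alpha> G A" unfolding L1.R_def by auto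
    have "emeasure (distr L1.L L1.L F) X = emeasure L1.L (internal1 \<alpha> G (\<lambda>n. f n -` A n \<inter> space (M n)))"
      using emeasure_distr[OF Fm L1.I_in_L[OF A(1)]] pre[of A] A(2) L1.space_L by simp
    also have "\<dots> = L1.v (\<lambda>n. f n -` A n \<inter> space (M n))" by (rule L1.emeasure_L_I[OF preP[OF A(1)]])
    also have "\<dots> = L1.v A" unfolding L1.v_def
      using ev_meas_eq[OF f L1.PD[OF A(1)]] by simp
    also have "\<dots> = emeasure L1.L X" using L1.emeasure_L_I[OF A(1)] A(2) by simp
    finally show "emeasure (distr L1.L L1.L F) X = emeasure L1.L X" .
  qed
  show ?thesis unfolding meas_pres_def
  proof (intro conjI ballI Fm)
    fix A assume "A \<in> sets L1.L"
    then show "emeasure L1.L (F -` A \<inter> space L1.L) = emeasure L1.L A"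
      using emeasure_distr[OF Fm, of A] D by simp
  qed
qed

lemma inv_pres_U: "meas_pres L1.L L1.L (\<lambda>x. inv\<^bsub>UG\<^esub> x)"
  by (rule pres_lemma[OF inv_Q inv_pres rep_inv])

lemma lt_pres_U: "g \<in> Q \<Longrightarrow> meas_pres L1.L L1.L (\<lambda>x. g \<otimes>\<^bsub>UG\<^esub> x)"
  by (rule pres_lemma[where f="\<lambda>n x. rep g n \<otimes>\<^bsub>G n\<^esub> x"])
     (auto intro: mult_Q lt_pres rep_carrier rep_mult)

lemma rt_pres_U: "g \<in> Q \<Longrightarrow> meas_pres L1.L L1.L (\<lambda>x. x \<otimes>\<^bsub>UG\<^esub> g)"
  by (rule pres_lemma[where f="\<lambda>n x. x \<otimes>\<^bsub>G n\<^esub> rep g n"])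
     (auto intro: mult_Q rt_pres rep_carrier rep_mult)

lemma inv_meas_U: "(\<lambda>x. inv\<^bsub>UG\<^esub> x) \<in> L1.L \<rightarrow>\<^sub>M L1.L"
  using inv_pres_U unfolding meas_pres_def by simp

lemma mult_meas_U: "(\<lambda>(x, y). x \<otimes>\<^bsub>UG\<^esub> y) \<in> L2.L \<rightarrow>\<^sub>M L1.L"
proof (rule measurable_sigma_sets[OF L1.sets_L L1.R_Pow])
  show "(\<lambda>(x, y). x \<otimes>\<^bsub>UG\<^esub> y) \<in> space L2.L \<rightarrow> Q" using mult_Q L2.space_L by auto
  fix y assume "y \<in> L1.R"
  then obtain A where A: "A \<in> L1.P" "y = internal1 \<alpha> G A" unfolding L1.R_def by auto
  define C where "C n = (\<lambda>(x, y). x \<otimes>\<^bsub>G n\<^esub> y) -` A n \<inter> space (M2 n)" for n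
  have CP: "C \<in> L2.P" unfolding C_def L2.P_def using measurable_sets[OF mult_meas L1.PD[OF A(1)]] by simp
  have "(\<lambda>(x, y). x \<otimes>\<^bsub>UG\<^esub> y) -` y \<inter> space L2.L = internal2 \<alpha> G C"
  proof (rule Set.set_eqI)
    fix Z
    show "Z \<in> (\<lambda>(x, y). x \<otimes>\<^bsub>UG\<^esub> y) -` y \<inter> space L2.L \<longleftrightarrow> Z \<in> internal2 \<alpha> G C"
    proof (cases "Z \<in> Q \<times> Q")
      case True
      obtain X Y where Z: "Z = (X, Y)" "X \<in> Q" "Y \<in> Q" using True by auto
      have sp: "(rep X n, rep Y n) \<in> space (M2 n)" for n using rep_carrier Z space_M2 by simp
      have "eventually (\<lambda>n. rep (X \<otimes>\<^bsub>UG\<^esub> Y) n \<in> A n) \<alpha> \<longleftrightarrow> eventually (\<lambda>n. rep X n \<otimes>\<^bsub>G n\<^esub> rep Y n \<in> A n) \<alpha>"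
      proof
        assume "eventually (\<lambda>n. rep (X \<otimes>\<^bsub>UG\<^esub> Y) n \<in> A n) \<alpha>"
        with rep_mult[OF Z(2,3)] show "eventually (\<lambda>n. rep X n \<otimes>\<^bsub>G n\<^esub> rep Y n \<in> A n) \<alpha>" by eventually_elim simp
      next
        assume "eventually (\<lambda>n. rep X n \<otimes>\<^bsub>G n\<^esub> rep Y n \<in> A n) \<alpha>"
        with rep_mult[OF Z(2,3)] show "eventually (\<lambda>n. rep (X \<otimes>\<^bsub>UG\<^esub> Y) n \<in> A n) \<alpha>" by eventually_elim simp
      qed
      then show ?thesis using Z mult_Q[OF Z(2,3)] sp A(2) L2.space_L
        by (simp add: I1_mem I2_mem C_def)
    next
      case False then show ?thesis using L2.space_L by (simp add: I2_mem)
    qed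
  qed
  then show "(\<lambda>(x, y). x \<otimes>\<^bsub>UG\<^esub> y) -` y \<inter> space L2.L \<in> sets L2.L" using L2.I_in_L[OF CP] by simp
qed

lemma I1_times: "internal1 \<alpha> G A \<times> internal1 \<alpha> G B = internal2 \<alpha> G (\<lambda>n. A n \<times> B n)"
proof (rule Set.set_eqI)
  fix Z :: "(nat \<Rightarrow> 'a) set \<times> (nat \<Rightarrow> 'a) set"
  obtain X Y where Z: "Z = (X, Y)" by (cases Z)
  have "eventually (\<lambda>n. rep X n \<in> A n \<and> rep Y n \<in> B n) \<alpha> \<longleftrightarrow>
    eventually (\<lambda>n. rep X n \<in> A n) \<alpha> \<and> eventually (\<lambda>n. rep Y n \<in> B n) \<alpha>"
    by (rule eventually_conj_iff)
  then show "Z \<in> internal1 \<alpha> G A \<times> internal1 \<alpha> G B \<longleftrightarrow> Z \<in> internal2 \<alpha> G (\<lambda>n. A n \<times> B n)"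
    unfolding Z I2_mem mem_Sigma_iff I1_mem fst_conv snd_conv mem_Times_iff by blast
qed

lemma times_P: "A \<in> L1.P \<Longrightarrow> B \<in> L1.P \<Longrightarrow> (\<lambda>n. A n \<times> B n) \<in> L2.P"
  unfolding L1.P_def L2.P_def using pair_sets pair_measureI by blast

lemma fst_meas: "fst \<in> L2.L \<rightarrow>\<^sub>M L1.L"
proof (rule measurable_sigma_sets[OF L1.sets_L L1.R_Pow])
  show "fst \<in> space L2.L \<rightarrow> Q" unfolding L2.space_L by (rule funcsetI) (auto simp: mem_Times_iff)
  fix y assume "y \<in> L1.R"
  then obtain A where A: "A \<in> L1.P" "y = internal1 \<alpha> G A" unfolding L1.R_def by auto
  have yQ: "y \<subseteq> Q" using A(2) L1.I_sub by simp
  have "fst -` y \<inter> space L2.L = y \<times> Q"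
  proof (rule Set.set_eqI)
    fix z :: "(nat \<Rightarrow> 'a) set \<times> (nat \<Rightarrow> 'a) set"
    obtain a b where z: "z = (a, b)" by (cases z)
    show "z \<in> fst -` y \<inter> space L2.L \<longleftrightarrow> z \<in> y \<times> Q"
      unfolding z L2.space_L using yQ by auto
  qed
  also have "\<dots> = internal1 \<alpha> G A \<times> internal1 \<alpha> G (\<lambda>n. space (M n))"
    using A(2) L1.I_space by simp
  finally have "fst -` y \<inter> space L2.L = internal1 \<alpha> G A \<times> internal1 \<alpha> G (\<lambda>n. space (M n))" .
  also have "\<dots> = internal2 \<alpha> G (\<lambda>n. A n \<times> space (M n))" by (rule I1_times)
  finally show "fst -` y \<inter> space L2.L \<in> sets L2.L"
    using L2.I_in_L[OF times_P[OF A(1) L1.P_space']] by simp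
qed

lemma snd_meas: "snd \<in> L2.L \<rightarrow>\<^sub>M L1.L"
proof (rule measurable_sigma_sets[OF L1.sets_L L1.R_Pow])
  show "snd \<in> space L2.L \<rightarrow> Q" unfolding L2.space_L by (rule funcsetI) (auto simp: mem_Times_iff)
  fix y assume "y \<in> L1.R"
  then obtain A where A: "A \<in> L1.P" "y = internal1 \<alpha> G A" unfolding L1.R_def by auto
  have yQ: "y \<subseteq> Q" using A(2) L1.I_sub by simp
  have "snd -` y \<inter> space L2.L = Q \<times> y"
  proof (rule Set.set_eqI)
    fix z :: "(nat \<Rightarrow> 'a) set \<times> (nat \<Rightarrow> 'a) set"
    obtain a b where z: "z = (a, b)" by (cases z)
    show "z \<in> snd -` y \<inter> space L2.L \<longleftrightarrow> z \<in> Q \<times> y"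
      unfolding z L2.space_L using yQ by auto
  qed
  also have "\<dots> = internal1 \<alpha> G (\<lambda>n. space (M n)) \<times> internal1 \<alpha> G A"
    using A(2) L1.I_space by simp
  finally have "snd -` y \<inter> space L2.L = internal1 \<alpha> G (\<lambda>n. space (M n)) \<times> internal1 \<alpha> G A" .
  also have "\<dots> = internal2 \<alpha> G (\<lambda>n. space (M n) \<times> A n)" by (rule I1_times)
  finally show "snd -` y \<inter> space L2.L \<in> sets L2.L"
    using L2.I_in_L[OF times_P[OF L1.P_space' A(1)]] by simp
qed

lemma id_meas: "(\<lambda>x. x) \<in> L2.L \<rightarrow>\<^sub>M L1.L \<Otimes>\<^sub>M L1.L"
  using measurable_Pair[OF fst_meas snd_meas] by simp

lemma pair_sets_U: "sets (L1.L \<Otimes>\<^sub>M L1.L) \<subseteq> sets L2.L"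
proof
  fix A assume A: "A \<in> sets (L1.L \<Otimes>\<^sub>M L1.L)"
  have "(\<lambda>x. x) -` A \<inter> space L2.L \<in> sets L2.L" by (rule measurable_sets[OF id_meas A])
  moreover have "A \<subseteq> space L2.L"
    using sets.sets_into_space[OF A] by (simp add: space_pair_measure L1.space_L L2.space_L)
  ultimately show "A \<in> sets L2.L" by (simp add: Int_absorb2)
qed

lemma pair_emeas_U: "A \<in> sets (L1.L \<Otimes>\<^sub>M L1.L) \<Longrightarrow> emeasure L2.L A = emeasure (L1.L \<Otimes>\<^sub>M L1.L) A"
proof -
  interpret P1: prob_space L1.L by (rule L1.prob_L)
  interpret PP: pair_prob_space L1.L L1.L ..
  let ?E = "{a \<times> b | a b. a \<in> L1.R \<and> b \<in> L1.R}"
  let ?D = "distr L2.L (L1.L \<Otimes>\<^sub>M L1.L) (\<lambda>x. x)"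
  have Q_cover: "\<exists>E\<subseteq>L1.R. countable E \<and> Q = \<Union>E" using L1.R_top by (intro exI[of _ "{Q}"]) auto
  have sets_pair: "sets (L1.L \<Otimes>\<^sub>M L1.L) = sigma_sets (Q \<times> Q) ?E"
  proof -
    have s: "sets L1.L = sets (sigma Q L1.R)" by (simp add: L1.sets_L sets_measure_of[OF L1.R_Pow])
    have "sets (L1.L \<Otimes>\<^sub>M L1.L) = sets (sigma Q L1.R \<Otimes>\<^sub>M sigma Q L1.R)"
      by (rule sets_pair_measure_cong[OF s s])
    also have "\<dots> = sets (sigma (Q \<times> Q) ?E)"
      by (subst sigma_prod[OF Q_cover L1.R_Pow Q_cover L1.R_Pow]) rule
    also have "\<dots> = sigma_sets (Q \<times> Q) ?E"
      by (rule sets_measure_of) (use L1.R_Pow in auto)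
    finally show ?thesis .
  qed
  have eq: "L1.L \<Otimes>\<^sub>M L1.L = ?D"
  proof (rule measure_eqI_generator_eq[where E="?E" and \<Omega>="Q \<times> Q"])
    show "Int_stable ?E"
      unfolding Int_stable_def
    proof (clarify)
      fix a b c d assume "a \<in> L1.R" "b \<in> L1.R" "c \<in> L1.R" "d \<in> L1.R"
      moreover have "a \<times> b \<inter> c \<times> d = (a \<inter> c) \<times> (b \<inter> d)" by auto
      ultimately show "\<exists>a' b'. a \<times> b \<inter> c \<times> d = a' \<times> b' \<and> a' \<in> L1.R \<and> b' \<in> L1.R"
        using L1.R_Int_stable unfolding Int_stable_def by blast
    qed
    show "?E \<subseteq> Pow (Q \<times> Q)" using L1.R_Pow by auto
    show "sets (L1.L \<Otimes>\<^sub>M L1.L) = sigma_sets (Q \<times> Q) ?E" by (rule sets_pair)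
    show "sets ?D = sigma_sets (Q \<times> Q) ?E" using sets_pair by simp
    show "range (\<lambda>i. Q \<times> Q) \<subseteq> ?E" using L1.R_top by auto
    show "(\<Union>i. Q \<times> Q) = Q \<times> Q" by simp
    show "emeasure (L1.L \<Otimes>\<^sub>M L1.L) (Q \<times> Q) \<noteq> \<infinity>" for i :: nat
      using PP.emeasure_finite by simp
  next
    fix X assume "X \<in> ?E"
    then obtain a b where ab: "X = a \<times> b" "a \<in> L1.R" "b \<in> L1.R" by auto
    obtain A where A: "A \<in> L1.P" "a = internal1 \<alpha> G A" using ab(2) unfolding L1.R_def by auto
    obtain B where B: "B \<in> L1.P" "b = internal1 \<alpha> G B" using ab(3) unfolding L1.R_def by auto
    have ab_sets: "a \<in> sets L1.L" "b \<in> sets L1.L" using A B L1.I_in_L by auto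
    have "emeasure (L1.L \<Otimes>\<^sub>M L1.L) X = emeasure L1.L a * emeasure L1.L b"
      using ab(1) ab_sets by (simp add: P1.emeasure_pair_measure_Times)
    also have "\<dots> = L1.v A * L1.v B" using A B L1.emeasure_L_I by simp
    also have "\<dots> = ennreal (Lim \<alpha> (\<lambda>n. measure (M n) (A n) * measure (M n) (B n)))"
      unfolding L1.v_def
      by (simp add: Lim_mult L1.ubdd_meas ennreal_mult[symmetric] L1.Lim_meas_nonneg del: ennreal_mult')
    also have "\<dots> = L2.v (\<lambda>n. A n \<times> B n)"
      unfolding L2.v_def
    proof (intro arg_cong[where f=ennreal] arg_cong[where f="Lim \<alpha>"] ext)
      fix n
      interpret Mn: prob_space "M n" by (rule prob_M)
      have AB: "A n \<in> sets (M n)" "B n \<in> sets (M n)" using A(1) B(1) L1.PD by auto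
      have "emeasure (M2 n) (A n \<times> B n) = emeasure (M n \<Otimes>\<^sub>M M n) (A n \<times> B n)"
        using pair_emeas AB by simp
      also have "\<dots> = emeasure (M n) (A n) * emeasure (M n) (B n)"
        using AB by (simp add: Mn.emeasure_pair_measure_Times)
      finally show "measure (M n) (A n) * measure (M n) (B n) = measure (M2 n) (A n \<times> B n)"
        by (simp add: measure_def enn2real_mult)
    qed
    also have "\<dots> = emeasure L2.L X"
      using L2.emeasure_L_I[OF times_P[OF A(1) B(1)]] ab(1) A(2) B(2) I1_times by simp
    also have "\<dots> = emeasure ?D X"
    proof -
      have "X \<in> sets (L1.L \<Otimes>\<^sub>M L1.L)" using ab(1) ab_sets by simp
      moreover have "X \<subseteq> space L2.L" using ab(1) ab_sets sets.sets_into_space L1.space_L L2.space_L by auto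
      ultimately show ?thesis using emeasure_distr[OF id_meas] by (simp add: Int_absorb2)
    qed
    finally show "emeasure (L1.L \<Otimes>\<^sub>M L1.L) X = emeasure ?D X" .
  qed
  assume A: "A \<in> sets (L1.L \<Otimes>\<^sub>M L1.L)"
  have "A \<subseteq> space L2.L"
    using sets.sets_into_space[OF A] by (simp add: space_pair_measure L1.space_L L2.space_L)
  then have "emeasure ?D A = emeasure L2.L A" using emeasure_distr[OF id_meas A] by (simp add: Int_absorb2)
  then show ?thesis using eq by simp
qed

end


lemma fub_ind:
  assumes F: "fubini_prop N N2" and C: "C \<in> sets N2"
  shows "\<And>g. g \<in> space N \<Longrightarrow> (\<lambda>h. indicator C (g, h) :: real) \<in> borel_measurable N"
    and "\<And>g. g \<in> space N \<Longrightarrow> (\<lambda>h. indicator C (h, g) :: real) \<in> borel_measurable N"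
    and "(\<lambda>g. \<integral>h. (indicator C (g, h) :: real) \<partial>N) \<in> borel_measurable N"
    and "(\<lambda>g. \<integral>h. (indicator C (h, g) :: real) \<partial>N) \<in> borel_measurable N"
    and "(\<integral>h. (\<integral>g. (indicator C (g, h) :: real) \<partial>N) \<partial>N) = measure N2 C"
    and "(\<integral>g. (\<integral>h. (indicator C (g, h) :: real) \<partial>N) \<partial>N) = measure N2 C"
proof -
  have m: "(indicator C :: _ \<Rightarrow> real) \<in> borel_measurable N2" using C by simp
  have b: "\<exists>B. \<forall>z\<in>space N2. \<bar>indicator C z :: real\<bar> \<le> B" by (intro exI[of _ 1]) (simp add: indicator_def)
  note fp = F[unfolded fubini_prop_def, rule_format, OF conjI[OF m b]]
  have i: "(\<integral>z. (indicator C z :: real) \<partial>N2) = measure N2 C"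
    using C sets.sets_into_space by (simp add: Int_absorb2)
  show "\<And>g. g \<in> space N \<Longrightarrow> (\<lambda>h. indicator C (g, h) :: real) \<in> borel_measurable N"
    "\<And>g. g \<in> space N \<Longrightarrow> (\<lambda>h. indicator C (h, g) :: real) \<in> borel_measurable N"
    "(\<lambda>g. \<integral>h. (indicator C (g, h) :: real) \<partial>N) \<in> borel_measurable N"
    "(\<lambda>g. \<integral>h. (indicator C (h, g) :: real) \<partial>N) \<in> borel_measurable N"
    using fp by auto
  show "(\<integral>h. (\<integral>g. (indicator C (g, h) :: real) \<partial>N) \<partial>N) = measure N2 C"
    "(\<integral>g. (\<integral>h. (indicator C (g, h) :: real) \<partial>N) \<partial>N) = measure N2 C"
    using fp i by auto
qed

lemma ind_sec1: "(\<integral>x. (indicator C (x, y) :: real) \<partial>N) = measure N ({x. (x, y) \<in> C} \<inter> space N)"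
proof -
  have "(\<lambda>x. indicator C (x, y) :: real) = indicator {x. (x, y) \<in> C}" by (auto simp: indicator_def)
  then show ?thesis by simp
qed

lemma ind_sec2: "(\<integral>x. (indicator C (y, x) :: real) \<partial>N) = measure N ({x. (y, x) \<in> C} \<inter> space N)"
proof -
  have "(\<lambda>x. indicator C (y, x) :: real) = indicator {x. (y, x) \<in> C}" by (auto simp: indicator_def)
  then show ?thesis by simp
qed

lemma sec_sets:
  assumes "(\<lambda>x. indicator C (f x) :: real) \<in> borel_measurable N"
  shows "{x. f x \<in> C} \<inter> space N \<in> sets N"
proof -
  have "(\<lambda>x. indicator C (f x) :: real) -` {1} \<inter> space N \<in> sets N"
    by (rule measurable_sets[OF assms]) simp
  moreover have "(\<lambda>x. indicator C (f x) :: real) -` {1} \<inter> space N = {x. f x \<in> C} \<inter> space N"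
    by (auto simp: indicator_def)
  ultimately show ?thesis by simp
qed

lemma ind_01: "0 \<le> (\<integral>x. (indicator C (f x) :: real) \<partial>N) \<and> (prob_space N \<longrightarrow> (\<integral>x. (indicator C (f x) :: real) \<partial>N) \<le> 1)"
proof -
  have "(\<lambda>x. indicator C (f x) :: real) = indicator {x. f x \<in> C}" by (auto simp: indicator_def)
  then show ?thesis using prob_space.prob_le_1 by auto
qed

context ugrp
begin

lemma sec1_pre: "h \<in> Q \<Longrightarrow> (\<lambda>g. (g, h)) -` internal2 \<alpha> G C \<inter> Q = internal1 \<alpha> G (\<lambda>n. {x. (x, rep h n) \<in> C n} \<inter> space (M n))"
proof (rule Set.set_eqI)
  fix g assume h: "h \<in> Q"
  show "g \<in> (\<lambda>g. (g, h)) -` internal2 \<alpha> G C \<inter> Q \<longleftrightarrow> g \<in> internal1 \<alpha> G (\<lambda>n. {x. (x, rep h n) \<in> C n} \<inter> space (M n))"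
  proof (cases "g \<in> Q")
    case True
    then show ?thesis using h L1.r_space[OF True] by (simp add: I1_mem I2_mem)
  next
    case False then show ?thesis by (simp add: I1_mem)
  qed
qed

lemma sec2_pre: "g \<in> Q \<Longrightarrow> (\<lambda>h. (g, h)) -` internal2 \<alpha> G C \<inter> Q = internal1 \<alpha> G (\<lambda>n. {y. (rep g n, y) \<in> C n} \<inter> space (M n))"
proof (rule Set.set_eqI)
  fix h assume g: "g \<in> Q"
  show "h \<in> (\<lambda>h. (g, h)) -` internal2 \<alpha> G C \<inter> Q \<longleftrightarrow> h \<in> internal1 \<alpha> G (\<lambda>n. {y. (rep g n, y) \<in> C n} \<inter> space (M n))"
  proof (cases "h \<in> Q")
    case True
    then show ?thesis using g L1.r_space[OF True] by (simp add: I1_mem I2_mem)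
  next
    case False then show ?thesis by (simp add: I1_mem)
  qed
qed

lemma sec1_P: "C \<in> L2.P \<Longrightarrow> h \<in> Q \<Longrightarrow> (\<lambda>n. {x. (x, rep h n) \<in> C n} \<inter> space (M n)) \<in> L1.P"
  unfolding L1.P_def L2.P_def
  using sec_sets[OF fub_ind(2)[OF fub _ L1.r_space]] by auto

lemma sec2_P: "C \<in> L2.P \<Longrightarrow> g \<in> Q \<Longrightarrow> (\<lambda>n. {y. (rep g n, y) \<in> C n} \<inter> space (M n)) \<in> L1.P"
  unfolding L1.P_def L2.P_def
  using sec_sets[OF fub_ind(1)[OF fub _ L1.r_space]] by auto

lemma sec1_meas: "h \<in> Q \<Longrightarrow> (\<lambda>g. (g, h)) \<in> L1.L \<rightarrow>\<^sub>M L2.L"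
proof (rule measurable_sigma_sets[OF L2.sets_L L2.R_Pow])
  assume h: "h \<in> Q"
  show "(\<lambda>g. (g, h)) \<in> space L1.L \<rightarrow> Q \<times> Q" using h L1.space_L by auto
  fix y assume "y \<in> L2.R"
  then obtain C where C: "C \<in> L2.P" "y = internal2 \<alpha> G C" unfolding L2.R_def by auto
  show "(\<lambda>g. (g, h)) -` y \<inter> space L1.L \<in> sets L1.L"
    using sec1_pre[OF h, of C] C L1.I_in_L[OF sec1_P[OF C(1) h]] L1.space_L by simp
qed

lemma sec2_meas: "g \<in> Q \<Longrightarrow> (\<lambda>h. (g, h)) \<in> L1.L \<rightarrow>\<^sub>M L2.L"
proof (rule measurable_sigma_sets[OF L2.sets_L L2.R_Pow])
  assume g: "g \<in> Q"
  show "(\<lambda>h. (g, h)) \<in> space L1.L \<rightarrow> Q \<times> Q" using g L1.space_L by auto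
  fix y assume "y \<in> L2.R"
  then obtain C where C: "C \<in> L2.P" "y = internal2 \<alpha> G C" unfolding L2.R_def by auto
  show "(\<lambda>h. (g, h)) -` y \<inter> space L1.L \<in> sets L1.L"
    using sec2_pre[OF g, of C] C L1.I_in_L[OF sec2_P[OF C(1) g]] L1.space_L by simp
qed

definition "K1 h = distr L1.L L2.L (\<lambda>g. (g, h))"
definition "K2 g = distr L1.L L2.L (\<lambda>h. (g, h))"

lemma K1_I2:
  assumes h: "h \<in> Q" and C: "C \<in> L2.P"
  shows "emeasure (K1 h) (internal2 \<alpha> G C) =
    ennreal (Lim \<alpha> (\<lambda>n. (\<lambda>y. \<integral>x. (indicator (C n) (x, y) :: real) \<partial>M n) (rep h n)))"
proof -
  have "emeasure (K1 h) (internal2 \<alpha> G C) = emeasure L1.L (internal1 \<alpha> G (\<lambda>n. {x. (x, rep h n) \<in> C n} \<inter> space (M n)))"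
    unfolding K1_def using emeasure_distr[OF sec1_meas[OF h] L2.I_in_L[OF C]] sec1_pre[OF h] L1.space_L by simp
  also have "\<dots> = L1.v (\<lambda>n. {x. (x, rep h n) \<in> C n} \<inter> space (M n))" by (rule L1.emeasure_L_I[OF sec1_P[OF C h]])
  also have "\<dots> = ennreal (Lim \<alpha> (\<lambda>n. (\<lambda>y. \<integral>x. (indicator (C n) (x, y) :: real) \<partial>M n) (rep h n)))"
    unfolding L1.v_def by (simp add: ind_sec1)
  finally show ?thesis .
qed

lemma K2_I2:
  assumes g: "g \<in> Q" and C: "C \<in> L2.P"
  shows "emeasure (K2 g) (internal2 \<alpha> G C) =
    ennreal (Lim \<alpha> (\<lambda>n. (\<lambda>x. \<integral>y. (indicator (C n) (x, y) :: real) \<partial>M n) (rep g n)))"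
proof -
  have "emeasure (K2 g) (internal2 \<alpha> G C) = emeasure L1.L (internal1 \<alpha> G (\<lambda>n. {y. (rep g n, y) \<in> C n} \<inter> space (M n)))"
    unfolding K2_def using emeasure_distr[OF sec2_meas[OF g] L2.I_in_L[OF C]] sec2_pre[OF g] L1.space_L by simp
  also have "\<dots> = L1.v (\<lambda>n. {y. (rep g n, y) \<in> C n} \<inter> space (M n))" by (rule L1.emeasure_L_I[OF sec2_P[OF C g]])
  also have "\<dots> = ennreal (Lim \<alpha> (\<lambda>n. (\<lambda>x. \<integral>y. (indicator (C n) (x, y) :: real) \<partial>M n) (rep g n)))"
    unfolding L1.v_def by (simp add: ind_sec2)
  finally show ?thesis .
qed

lemma phi1_props:
  assumes C: "C \<in> L2.P"
  shows "\<And>n. (\<lambda>y. \<integral>x. (indicator (C n) (x, y) :: real) \<partial>M n) \<in> borel_measurable (M n)"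
    and "\<And>n y. y \<in> space (M n) \<Longrightarrow> 0 \<le> (\<lambda>y. \<integral>x. (indicator (C n) (x, y) :: real) \<partial>M n) y \<and>
          (\<lambda>y. \<integral>x. (indicator (C n) (x, y) :: real) \<partial>M n) y \<le> 1"
    and "\<And>n. (\<integral>y. (\<integral>x. (indicator (C n) (x, y) :: real) \<partial>M n) \<partial>M n) = measure (M2 n) (C n)"
proof -
  have Cn: "C n \<in> sets (M2 n)" for n using C unfolding L2.P_def by auto
  show "\<And>n. (\<lambda>y. \<integral>x. (indicator (C n) (x, y) :: real) \<partial>M n) \<in> borel_measurable (M n)"
    using fub_ind(4)[OF fub Cn] .
  show "\<And>n y. y \<in> space (M n) \<Longrightarrow> 0 \<le> (\<lambda>y. \<integral>x. (indicator (C n) (x, y) :: real) \<partial>M n) y \<and>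
          (\<lambda>y. \<integral>x. (indicator (C n) (x, y) :: real) \<partial>M n) y \<le> 1"
  proof -
    fix n y
    show "0 \<le> (\<lambda>y. \<integral>x. (indicator (C n) (x, y) :: real) \<partial>M n) y \<and>
          (\<lambda>y. \<integral>x. (indicator (C n) (x, y) :: real) \<partial>M n) y \<le> 1"
      using ind_01[where C="C n" and f="\<lambda>x. (x, y)" and N="M n"] prob_M[of n] by simp
  qed
  show "\<And>n. (\<integral>y. (\<integral>x. (indicator (C n) (x, y) :: real) \<partial>M n) \<partial>M n) = measure (M2 n) (C n)"
    using fub_ind(5)[OF fub Cn] .
qed

lemma phi2_props:
  assumes C: "C \<in> L2.P"
  shows "\<And>n. (\<lambda>x. \<integral>y. (indicator (C n) (x, y) :: real) \<partial>M n) \<in> borel_measurable (M n)"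
    and "\<And>n x. x \<in> space (M n) \<Longrightarrow> 0 \<le> (\<lambda>x. \<integral>y. (indicator (C n) (x, y) :: real) \<partial>M n) x \<and>
          (\<lambda>x. \<integral>y. (indicator (C n) (x, y) :: real) \<partial>M n) x \<le> 1"
    and "\<And>n. (\<integral>x. (\<integral>y. (indicator (C n) (x, y) :: real) \<partial>M n) \<partial>M n) = measure (M2 n) (C n)"
proof -
  have Cn: "C n \<in> sets (M2 n)" for n using C unfolding L2.P_def by auto
  show "\<And>n. (\<lambda>x. \<integral>y. (indicator (C n) (x, y) :: real) \<partial>M n) \<in> borel_measurable (M n)"
    using fub_ind(3)[OF fub Cn] .
  show "\<And>n x. x \<in> space (M n) \<Longrightarrow> 0 \<le> (\<lambda>x. \<integral>y. (indicator (C n) (x, y) :: real) \<partial>M n) x \<and>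
          (\<lambda>x. \<integral>y. (indicator (C n) (x, y) :: real) \<partial>M n) x \<le> 1"
  proof -
    fix n x
    show "0 \<le> (\<lambda>x. \<integral>y. (indicator (C n) (x, y) :: real) \<partial>M n) x \<and>
          (\<lambda>x. \<integral>y. (indicator (C n) (x, y) :: real) \<partial>M n) x \<le> 1"
      using ind_01[where C="C n" and f="\<lambda>y. (x, y)" and N="M n"] prob_M[of n] by simp
  qed
  show "\<And>n. (\<integral>x. (\<integral>y. (indicator (C n) (x, y) :: real) \<partial>M n) \<partial>M n) = measure (M2 n) (C n)"
    using fub_ind(6)[OF fub Cn] .
qed

end


context ugrp
begin

lemma Phi_nonneg:
  fixes \<phi> :: "nat \<Rightarrow> 'a \<Rightarrow> real"
  assumes phi: "\<And>n x. x \<in> space (M n) \<Longrightarrow> 0 \<le> \<phi> n x \<and> \<phi> n x \<le> 1" and h: "h \<in> Q"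
  shows "0 \<le> Lim \<alpha> (\<lambda>n. \<phi> n (rep h n))"
proof -
  have "ubdd (\<lambda>n. \<phi> n (rep h n))" by (rule ubdd_01) (use phi L1.r_space[OF h] in auto)
  then show ?thesis by (rule Lim_ge) (use phi L1.r_space[OF h] in auto)
qed

lemma kernel_meas:
  fixes K :: "(nat \<Rightarrow> 'a) set \<Rightarrow> ((nat \<Rightarrow> 'a) set \<times> (nat \<Rightarrow> 'a) set) measure"
    and \<phi> :: "(nat \<Rightarrow> ('a \<times> 'a) set) \<Rightarrow> nat \<Rightarrow> 'a \<Rightarrow> real"
  assumes Kprob: "\<And>h. h \<in> Q \<Longrightarrow> prob_space (K h)"
    and Ksets: "\<And>h. h \<in> Q \<Longrightarrow> sets (K h) = sets L2.L"
    and KI: "\<And>h C. h \<in> Q \<Longrightarrow> C \<in> L2.P \<Longrightarrow> emeasure (K h) (internal2 \<alpha> G C) = ennreal (Lim \<alpha> (\<lambda>n. \<phi> C n (rep h n)))"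
    and phim: "\<And>C n. C \<in> L2.P \<Longrightarrow> \<phi> C n \<in> borel_measurable (M n)"
    and phib: "\<And>C n x. C \<in> L2.P \<Longrightarrow> x \<in> space (M n) \<Longrightarrow> 0 \<le> \<phi> C n x \<and> \<phi> C n x \<le> 1"
    and phii: "\<And>C n. C \<in> L2.P \<Longrightarrow> (\<integral>x. \<phi> C n x \<partial>M n) = measure (M2 n) (C n)"
  shows "K \<in> L1.L \<rightarrow>\<^sub>M subprob_algebra L2.L" and "L1.L \<bind> K = L2.L"
proof -
  show Km: "K \<in> L1.L \<rightarrow>\<^sub>M subprob_algebra L2.L"
  proof (rule measurable_subprob_algebra_generated[OF L2.sets_L L2.R_Int_stable L2.R_Pow])
    fix a assume "a \<in> space L1.L"
    then have a: "a \<in> Q" using L1.space_L by simp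
    show "subprob_space (K a)" by (rule prob_space_imp_subprob_space[OF Kprob[OF a]])
    show "sets (K a) = sets L2.L" by (rule Ksets[OF a])
  next
    fix A assume "A \<in> L2.R"
    then obtain C where C: "C \<in> L2.P" "A = internal2 \<alpha> G C" unfolding L2.R_def by auto
    have Pm: "(\<lambda>\<omega>. Lim \<alpha> (\<lambda>n. \<phi> C n (rep \<omega> n))) \<in> borel_measurable L1.L"
      by (rule L1.loeb_integral(1)[OF phim[OF C(1)] phib[OF C(1)]])
    then have m2: "(\<lambda>\<omega>. ennreal (Lim \<alpha> (\<lambda>n. \<phi> C n (rep \<omega> n)))) \<in> borel_measurable L1.L"
      by (rule measurable_compose[OF _ measurable_ennreal])
    have eq: "\<And>a. a \<in> space L1.L \<Longrightarrow> emeasure (K a) A = ennreal (Lim \<alpha> (\<lambda>n. \<phi> C n (rep a n)))"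
    proof -
      fix a assume "a \<in> space L1.L"
      then have "a \<in> Q" using L1.space_L by simp
      then show "emeasure (K a) A = ennreal (Lim \<alpha> (\<lambda>n. \<phi> C n (rep a n)))" using KI[OF _ C(1)] C(2) by simp
    qed
    have "(\<lambda>a. emeasure (K a) A) \<in> borel_measurable L1.L \<longleftrightarrow>
      (\<lambda>\<omega>. ennreal (Lim \<alpha> (\<lambda>n. \<phi> C n (rep \<omega> n)))) \<in> borel_measurable L1.L"
      by (rule measurable_cong) (rule eq)
    from this m2 show "(\<lambda>a. emeasure (K a) A) \<in> borel_measurable L1.L" by (rule iffD2)
  next
    have e1: "\<And>a. a \<in> space L1.L \<Longrightarrow> emeasure (K a) (Q \<times> Q) = 1"
    proof -
      fix a assume "a \<in> space L1.L"
      then have a: "a \<in> Q" using L1.space_L by simp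
      have "space (K a) = Q \<times> Q" using sets_eq_imp_space_eq[OF Ksets[OF a]] L2.space_L by simp
      then show "emeasure (K a) (Q \<times> Q) = 1" using prob_space.emeasure_space_1[OF Kprob[OF a]] by simp
    qed
    have "(\<lambda>a. emeasure (K a) (Q \<times> Q)) \<in> borel_measurable L1.L \<longleftrightarrow> (\<lambda>a. 1::ennreal) \<in> borel_measurable L1.L"
      by (rule measurable_cong) (rule e1)
    then show "(\<lambda>a. emeasure (K a) (Q \<times> Q)) \<in> borel_measurable L1.L" by simp
  qed
  have ne: "space L1.L \<noteq> {}" using prob_space.not_empty[OF L1.prob_L] .
  show "L1.L \<bind> K = L2.L"
  proof (rule measure_eqI_generator_eq[OF L2.R_Int_stable L2.R_Pow])
    show "sets (L1.L \<bind> K) = sigma_sets (Q \<times> Q) L2.R"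
      using sets_bind[of L1.L K L2.L] Ksets L1.space_L ne L2.sets_L by simp
    show "sets L2.L = sigma_sets (Q \<times> Q) L2.R" by (rule L2.sets_L)
    show "range (\<lambda>i. Q \<times> Q) \<subseteq> L2.R" using L2.R_top by auto
    show "(\<Union>i. Q \<times> Q) = Q \<times> Q" by simp
    show "emeasure (L1.L \<bind> K) (Q \<times> Q) \<noteq> \<infinity>" for i :: nat
    proof -
      interpret B: subprob_space "L1.L \<bind> K"
        by (rule subprob_space_bind[OF prob_space_imp_subprob_space[OF L1.prob_L] Km])
      show ?thesis using B.emeasure_finite by simp
    qed
  next
    fix X assume "X \<in> L2.R"
    then obtain C where C: "C \<in> L2.P" "X = internal2 \<alpha> G C" unfolding L2.R_def by auto
    let ?\<Phi> = "\<lambda>\<omega>. Lim \<alpha> (\<lambda>n. \<phi> C n (rep \<omega> n))"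
    have XS: "X \<in> sets L2.L" using C L2.I_in_L by simp
    have nn: "0 \<le> ?\<Phi> h" if "h \<in> Q" for h
    proof (rule Phi_nonneg[OF _ that])
      fix n x assume "x \<in> space (M n)"
      then show "0 \<le> \<phi> C n x \<and> \<phi> C n x \<le> 1" by (rule phib[OF C(1)])
    qed
    have "emeasure (L1.L \<bind> K) X = (\<integral>\<^sup>+h. emeasure (K h) X \<partial>L1.L)"
      by (rule emeasure_bind[OF ne Km XS])
    also have "\<dots> = (\<integral>\<^sup>+h. ennreal (?\<Phi> h) \<partial>L1.L)"
    proof (rule nn_integral_cong)
      fix h assume "h \<in> space L1.L"
      then have "h \<in> Q" using L1.space_L by simp
      then show "emeasure (K h) X = ennreal (?\<Phi> h)" using KI[OF _ C(1)] C(2) by simp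
    qed
    also have "\<dots> = ennreal (\<integral>h. ?\<Phi> h \<partial>L1.L)"
    proof (rule nn_integral_eq_integral)
      show "integrable L1.L ?\<Phi>"
        by (rule L1.loeb_integral(2)) (rule phim[OF C(1)], erule phib[OF C(1)])
      show "AE h in L1.L. 0 \<le> ?\<Phi> h"
        by (rule AE_I2) (use nn L1.space_L in auto)
    qed
    also have "\<dots> = ennreal (Lim \<alpha> (\<lambda>n. \<integral>x. \<phi> C n x \<partial>M n))"
    proof -
      have "(\<integral>h. ?\<Phi> h \<partial>L1.L) = Lim \<alpha> (\<lambda>n. \<integral>x. \<phi> C n x \<partial>M n)"
        by (rule L1.loeb_integral(3)) (rule phim[OF C(1)], erule phib[OF C(1)])
      then show ?thesis by simp
    qed
    also have "\<dots> = L2.v C" unfolding L2.v_def using phii[OF C(1)] by simp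
    also have "\<dots> = emeasure L2.L X" using L2.emeasure_L_I[OF C(1)] C(2) by simp
    finally show "emeasure (L1.L \<bind> K) X = emeasure L2.L X" .
  qed
qed

lemma K1_prob: "h \<in> Q \<Longrightarrow> prob_space (K1 h)"
  unfolding K1_def by (rule prob_space.prob_space_distr[OF L1.prob_L sec1_meas])
lemma K2_prob: "h \<in> Q \<Longrightarrow> prob_space (K2 h)"
  unfolding K2_def by (rule prob_space.prob_space_distr[OF L1.prob_L sec2_meas])

lemma K1_sets: "h \<in> Q \<Longrightarrow> sets (K1 h) = sets L2.L" unfolding K1_def by simp
lemma K2_sets: "h \<in> Q \<Longrightarrow> sets (K2 h) = sets L2.L" unfolding K2_def by simp

lemma K1_facts: "K1 \<in> L1.L \<rightarrow>\<^sub>M subprob_algebra L2.L" "L1.L \<bind> K1 = L2.L"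
proof -
  show "K1 \<in> L1.L \<rightarrow>\<^sub>M subprob_algebra L2.L"
    apply (rule kernel_meas(1)[where K=K1 and \<phi>="\<lambda>C n y. \<integral>x. (indicator (C n) (x, y) :: real) \<partial>M n"])
    apply (erule K1_prob)
    apply (erule K1_sets)
    apply (erule (1) K1_I2)
    apply (erule phi1_props(1))
    apply (erule (1) phi1_props(2))
    apply (erule phi1_props(3))
    done
  show "L1.L \<bind> K1 = L2.L"
    apply (rule kernel_meas(2)[where K=K1 and \<phi>="\<lambda>C n y. \<integral>x. (indicator (C n) (x, y) :: real) \<partial>M n"])
    apply (erule K1_prob)
    apply (erule K1_sets)
    apply (erule (1) K1_I2)
    apply (erule phi1_props(1))
    apply (erule (1) phi1_props(2))
    apply (erule phi1_props(3))
    done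

qed

lemma K2_facts: "K2 \<in> L1.L \<rightarrow>\<^sub>M subprob_algebra L2.L" "L1.L \<bind> K2 = L2.L"
proof -
  show "K2 \<in> L1.L \<rightarrow>\<^sub>M subprob_algebra L2.L"
    apply (rule kernel_meas(1)[where K=K2 and \<phi>="\<lambda>C n x. \<integral>y. (indicator (C n) (x, y) :: real) \<partial>M n"])
    apply (erule K2_prob)
    apply (erule K2_sets)
    apply (erule (1) K2_I2)
    apply (erule phi2_props(1))
    apply (erule (1) phi2_props(2))
    apply (erule phi2_props(3))
    done
  show "L1.L \<bind> K2 = L2.L"
    apply (rule kernel_meas(2)[where K=K2 and \<phi>="\<lambda>C n x. \<integral>y. (indicator (C n) (x, y) :: real) \<partial>M n"])
    apply (erule K2_prob)
    apply (erule K2_sets)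
    apply (erule (1) K2_I2)
    apply (erule phi2_props(1))
    apply (erule (1) phi2_props(2))
    apply (erule phi2_props(3))
    done

qed

end


context ugrp
begin

lemma K_space1: "g \<in> Q \<Longrightarrow> space (K1 g) = space L2.L" unfolding K1_def by simp
lemma K_space2: "g \<in> Q \<Longrightarrow> space (K2 g) = space L2.L" unfolding K2_def by simp

lemma fub_U: "fubini_prop L1.L L2.L"
  unfolding fubini_prop_def
proof (intro allI impI)
  fix f :: "_ \<Rightarrow> real" assume "f \<in> borel_measurable L2.L \<and> (\<exists>B. \<forall>z\<in>space L2.L. \<bar>f z\<bar> \<le> B)"
  then obtain B where fm[measurable]: "f \<in> borel_measurable L2.L" and B: "\<And>z. z \<in> space L2.L \<Longrightarrow> \<bar>f z\<bar> \<le> B" by auto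
  interpret P1: prob_space L1.L by (rule L1.prob_L)
  have sec1: "(\<lambda>h. f (h, g)) \<in> borel_measurable L1.L" if "g \<in> Q" for g
    using measurable_compose[OF sec1_meas[OF that] fm] by simp
  have sec2: "(\<lambda>h. f (g, h)) \<in> borel_measurable L1.L" if "g \<in> Q" for g
    using measurable_compose[OF sec2_meas[OF that] fm] by simp
  have i1: "(\<integral>h. f (h, g) \<partial>L1.L) = integral\<^sup>L (K1 g) f" if "g \<in> Q" for g
    unfolding K1_def by (rule integral_distr[OF sec1_meas[OF that] fm, symmetric])
  have i2: "(\<integral>h. f (g, h) \<partial>L1.L) = integral\<^sup>L (K2 g) f" if "g \<in> Q" for g
    unfolding K2_def by (rule integral_distr[OF sec2_meas[OF that] fm, symmetric])
  have im1: "(\<lambda>g. integral\<^sup>L (K1 g) f) \<in> borel_measurable L1.L"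
    by (rule measurable_compose[OF K1_facts(1) integral_measurable_subprob_algebra[OF fm]])
  have im2: "(\<lambda>g. integral\<^sup>L (K2 g) f) \<in> borel_measurable L1.L"
    by (rule measurable_compose[OF K2_facts(1) integral_measurable_subprob_algebra[OF fm]])
  have b1: "(\<lambda>g. \<integral>h. f (h, g) \<partial>L1.L) \<in> borel_measurable L1.L"
  proof -
    have "(\<lambda>g. \<integral>h. f (h, g) \<partial>L1.L) \<in> borel_measurable L1.L \<longleftrightarrow> (\<lambda>g. integral\<^sup>L (K1 g) f) \<in> borel_measurable L1.L"
      by (rule measurable_cong) (use i1 L1.space_L in auto)
    then show ?thesis using im1 by simp
  qed
  have b2: "(\<lambda>g. \<integral>h. f (g, h) \<partial>L1.L) \<in> borel_measurable L1.L"
  proof -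
    have "(\<lambda>g. \<integral>h. f (g, h) \<partial>L1.L) \<in> borel_measurable L1.L \<longleftrightarrow> (\<lambda>g. integral\<^sup>L (K2 g) f) \<in> borel_measurable L1.L"
      by (rule measurable_cong) (use i2 L1.space_L in auto)
    then show ?thesis using im2 by simp
  qed
  have ae1: "AE x in L1.L. emeasure (K1 x) (space (K1 x)) \<le> ennreal 1"
  proof (rule AE_I2)
    fix x assume "x \<in> space L1.L"
    then have "prob_space (K1 x)" using K1_prob L1.space_L by simp
    then show "emeasure (K1 x) (space (K1 x)) \<le> ennreal 1" using prob_space.emeasure_space_1[of "K1 x"] by simp
  qed
  have ae2: "AE x in L1.L. emeasure (K2 x) (space (K2 x)) \<le> ennreal 1"
  proof (rule AE_I2)
    fix x assume "x \<in> space L1.L"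
    then have "prob_space (K2 x)" using K2_prob L1.space_L by simp
    then show "emeasure (K2 x) (space (K2 x)) \<le> ennreal 1" using prob_space.emeasure_space_1[of "K2 x"] by simp
  qed
  have c1: "(\<integral>z. f z \<partial>L2.L) = (\<integral>h. (\<integral>g. f (g, h) \<partial>L1.L) \<partial>L1.L)"
  proof -
    have "(\<integral>z. f z \<partial>L2.L) = integral\<^sup>L (L1.L \<bind> K1) f" using K1_facts(2) by simp
    also have "\<dots> = (\<integral>h. integral\<^sup>L (K1 h) f \<partial>L1.L)"
      by (rule integral_bind[OF fm B K1_facts(1) P1.finite_measure_axioms ae1])
    also have "\<dots> = (\<integral>h. (\<integral>g. f (g, h) \<partial>L1.L) \<partial>L1.L)"
      by (rule Bochner_Integration.integral_cong[OF refl]) (use i1 L1.space_L in auto)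
    finally show ?thesis .
  qed
  have c2: "(\<integral>z. f z \<partial>L2.L) = (\<integral>g. (\<integral>h. f (g, h) \<partial>L1.L) \<partial>L1.L)"
  proof -
    have "(\<integral>z. f z \<partial>L2.L) = integral\<^sup>L (L1.L \<bind> K2) f" using K2_facts(2) by simp
    also have "\<dots> = (\<integral>g. integral\<^sup>L (K2 g) f \<partial>L1.L)"
      by (rule integral_bind[OF fm B K2_facts(1) P1.finite_measure_axioms ae2])
    also have "\<dots> = (\<integral>g. (\<integral>h. f (g, h) \<partial>L1.L) \<partial>L1.L)"
      by (rule Bochner_Integration.integral_cong[OF refl]) (use i2 L1.space_L in auto)
    finally show ?thesis .
  qed
  show "(\<forall>g\<in>space L1.L. (\<lambda>h. f (g, h)) \<in> borel_measurable L1.L \<and> (\<lambda>h. f (h, g)) \<in> borel_measurable L1.L) \<and>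
       (\<lambda>g. \<integral>h. f (g, h) \<partial>L1.L) \<in> borel_measurable L1.L \<and>
       (\<lambda>g. \<integral>h. f (h, g) \<partial>L1.L) \<in> borel_measurable L1.L \<and>
       (\<integral>h. (\<integral>g. f (g, h) \<partial>L1.L) \<partial>L1.L) = (\<integral>z. f z \<partial>L2.L) \<and>
       (\<integral>g. (\<integral>h. f (g, h) \<partial>L1.L) \<partial>L1.L) = (\<integral>z. f z \<partial>L2.L)"
    using sec1 sec2 b1 b2 c1 c2 L1.space_L by simp
qed

lemma prob_group_U: "prob_group UG L1.L L2.L"
  unfolding prob_group_def
proof (intro conjI ballI)
  show "group UG" by (rule group_UG)
  show "space L1.L = carrier UG" using L1.space_L carrier_UG by simp
  show "space L2.L = carrier UG \<times> carrier UG" using L2.space_L carrier_UG by simp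
  show "prob_space L1.L" by (rule L1.prob_L)
  show "prob_space L2.L" by (rule L2.prob_L)
  show "sets (L1.L \<Otimes>\<^sub>M L1.L) \<subseteq> sets L2.L" by (rule pair_sets_U)
  show "emeasure L2.L A = emeasure (L1.L \<Otimes>\<^sub>M L1.L) A" if "A \<in> sets (L1.L \<Otimes>\<^sub>M L1.L)" for A
    by (rule pair_emeas_U[OF that])
  show "(\<lambda>(x, y). x \<otimes>\<^bsub>UG\<^esub> y) \<in> L2.L \<rightarrow>\<^sub>M L1.L" by (rule mult_meas_U)
  show "(\<lambda>x. inv\<^bsub>UG\<^esub> x) \<in> L1.L \<rightarrow>\<^sub>M L1.L" by (rule inv_meas_U)
  show "meas_pres L1.L L1.L (\<lambda>x. g \<otimes>\<^bsub>UG\<^esub> x)" if "g \<in> carrier UG" for g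
    using lt_pres_U that carrier_UG by simp
  show "meas_pres L1.L L1.L (\<lambda>x. x \<otimes>\<^bsub>UG\<^esub> g)" if "g \<in> carrier UG" for g
    using rt_pres_U that carrier_UG by simp
  show "meas_pres L1.L L1.L (\<lambda>x. inv\<^bsub>UG\<^esub> x)" by (rule inv_pres_U)
  show "fubini_prop L1.L L2.L" by (rule fub_U)
qed

end

theorem mainTheorem1:
  fixes \<alpha> :: "nat filter"
    and G :: "nat \<Rightarrow> 'a monoid"
    and M :: "nat \<Rightarrow> 'a measure"
    and M2 :: "nat \<Rightarrow> ('a \<times> 'a) measure"
  assumes "nonprincipal_ultrafilter \<alpha>"
    and "\<And>n. prob_group (G n) (M n) (M2 n)"
  shows "prob_group (ultraprod_group \<alpha> G) (ultra_measure \<alpha> G M) (ultra_measure2 \<alpha> G M2)"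
proof -
  interpret ugrp \<alpha> G M M2
    by (intro ugrp.intro ultra.intro ugrp_axioms.intro assms)
  show ?thesis using prob_group_U um_eq um2_eq by simp
qed


end
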